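(* Let $\Lambda$ be an Artin algebra and $0\to A\xrightarrow{g}B\xrightarrow{f}C\to0$ a non-split exact sequence in $\mathrm{mod}\,\Lambda$ with $B$ projective and injective. Then the following are equivalent: (1) $A$ is indecomposable and $g$ is left minimal; (2) $C$ is indecomposable and $f$ is right minimal.
   Context: $\mathrm{mod}\,\Lambda$ is the category of finitely generated left $\Lambda$-modules. A morphism $g:A\to B$ is left minimal if every endomorphism $h:B\to B$ with $hg=g$ is an automorphism; dually, $f:B\to C$ is right minimal if every endomorphism $h:B\to B$ with $fh=f$ is an automorphism. *)

theory Defs
  imports "HOL-Algebra.Algebra"
begin

text \<open>Left modules over a (not necessarily commutative) ring L.
  HOL-Algebra's locale module requires a commutative ring, so we define left modules here.\<close>

definition lmodule :: "'r ring \<Rightarrow> ('r, 'm) module \<Rightarrow> bool" where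
  "lmodule L M \<longleftrightarrow> ring L \<and> abelian_group M \<and>
     (\<forall>a\<in>carrier L. \<forall>x\<in>carrier M. a \<odot>\<^bsub>M\<^esub> x \<in> carrier M) \<and>
     (\<forall>a\<in>carrier L. \<forall>b\<in>carrier L. \<forall>x\<in>carrier M.
        (a \<oplus>\<^bsub>L\<^esub> b) \<odot>\<^bsub>M\<^esub> x = (a \<odot>\<^bsub>M\<^esub> x) \<oplus>\<^bsub>M\<^esub> (b \<odot>\<^bsub>M\<^esub> x)) \<and>
     (\<forall>a\<in>carrier L. \<forall>x\<in>carrier M. \<forall>y\<in>carrier M.
        a \<odot>\<^bsub>M\<^esub> (x \<oplus>\<^bsub>M\<^esub> y) = (a \<odot>\<^bsub>M\<^esub> x) \<oplus>\<^bsub>M\<^esub> (a \<odot>\<^bsub>M\<^esub> y)) \<and>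
     (\<forall>a\<in>carrier L. \<forall>b\<in>carrier L. \<forall>x\<in>carrier M.
        (a \<otimes>\<^bsub>L\<^esub> b) \<odot>\<^bsub>M\<^esub> x = a \<odot>\<^bsub>M\<^esub> (b \<odot>\<^bsub>M\<^esub> x)) \<and>
     (\<forall>x\<in>carrier M. \<one>\<^bsub>L\<^esub> \<odot>\<^bsub>M\<^esub> x = x)"

definition fg_lmodule :: "'r ring \<Rightarrow> ('r, 'm) module \<Rightarrow> bool" where
  "fg_lmodule L M \<longleftrightarrow> lmodule L M \<and>
     (\<exists>S. finite S \<and> S \<subseteq> carrier M \<and>
        (\<forall>x\<in>carrier M. \<exists>c. c \<in> S \<rightarrow> carrier L \<and> x = finsum M (\<lambda>s. c s \<odot>\<^bsub>M\<^esub> s) S))"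

definition lhom :: "'r ring \<Rightarrow> ('r, 'm) module \<Rightarrow> ('r, 'n) module \<Rightarrow> ('m \<Rightarrow> 'n) \<Rightarrow> bool" where
  "lhom L M N h \<longleftrightarrow> h \<in> carrier M \<rightarrow> carrier N \<and>
     (\<forall>x\<in>carrier M. \<forall>y\<in>carrier M. h (x \<oplus>\<^bsub>M\<^esub> y) = h x \<oplus>\<^bsub>N\<^esub> h y) \<and>
     (\<forall>a\<in>carrier L. \<forall>x\<in>carrier M. h (a \<odot>\<^bsub>M\<^esub> x) = a \<odot>\<^bsub>N\<^esub> h x)"

definition artinian_cring :: "'k ring \<Rightarrow> bool" where
  "artinian_cring R \<longleftrightarrow> cring R \<and>
     (\<forall>I :: nat \<Rightarrow> 'k set. (\<forall>n. ideal (I n) R \<and> I (Suc n) \<subseteq> I n) \<longrightarrow>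
        (\<exists>N. \<forall>n\<ge>N. I n = I N))"

definition artin_algebra :: "'k ring \<Rightarrow> ('k \<Rightarrow> 'r) \<Rightarrow> 'r ring \<Rightarrow> bool" where
  "artin_algebra R phi L \<longleftrightarrow> artinian_cring R \<and> ring L \<and> phi \<in> ring_hom R L \<and>
     (\<forall>r\<in>carrier R. \<forall>x\<in>carrier L. phi r \<otimes>\<^bsub>L\<^esub> x = x \<otimes>\<^bsub>L\<^esub> phi r) \<and>
     (\<exists>S. finite S \<and> S \<subseteq> carrier L \<and>
        (\<forall>x\<in>carrier L. \<exists>c. c \<in> S \<rightarrow> carrier R \<and>
           x = finsum L (\<lambda>s. phi (c s) \<otimes>\<^bsub>L\<^esub> s) S))"

text \<open>Test objects range over finitely generated
  L-modules whose elements are sets of sequences in L; every finitely generated L-module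
  (a quotient of L^n) is isomorphic to such a module, so this is the usual notion.\<close>
definition proj_mod :: "'r ring \<Rightarrow> ('r, 'p) module \<Rightarrow> bool" where
  "proj_mod L P \<longleftrightarrow> fg_lmodule L P \<and>
     (\<forall>(M :: ('r, (nat \<Rightarrow> 'r) set) module) (N :: ('r, (nat \<Rightarrow> 'r) set) module) h p.
        fg_lmodule L M \<and> fg_lmodule L N \<and> lhom L M N h \<and> h ` carrier M = carrier N \<and>
        lhom L P N p \<longrightarrow>
        (\<exists>q. lhom L P M q \<and> (\<forall>x\<in>carrier P. h (q x) = p x)))"

definition inj_mod :: "'r ring \<Rightarrow> ('r, 'p) module \<Rightarrow> bool" where
  "inj_mod L I \<longleftrightarrow> fg_lmodule L I \<and>
     (\<forall>(M :: ('r, (nat \<Rightarrow> 'r) set) module) (N :: ('r, (nat \<Rightarrow> 'r) set) module) h p.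
        fg_lmodule L M \<and> fg_lmodule L N \<and> lhom L M N h \<and> inj_on h (carrier M) \<and>
        lhom L M I p \<longrightarrow>
        (\<exists>q. lhom L N I q \<and> (\<forall>x\<in>carrier M. q (h x) = p x)))"

definition submod :: "'r ring \<Rightarrow> ('r, 'm) module \<Rightarrow> 'm set \<Rightarrow> bool" where
  "submod L M U \<longleftrightarrow> U \<subseteq> carrier M \<and> \<zero>\<^bsub>M\<^esub> \<in> U \<and>
     (\<forall>x\<in>U. \<forall>y\<in>U. x \<oplus>\<^bsub>M\<^esub> y \<in> U) \<and> (\<forall>a\<in>carrier L. \<forall>x\<in>U. a \<odot>\<^bsub>M\<^esub> x \<in> U)"

definition indecomposable :: "'r ring \<Rightarrow> ('r, 'm) module \<Rightarrow> bool" where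
  "indecomposable L M \<longleftrightarrow> carrier M \<noteq> {\<zero>\<^bsub>M\<^esub>} \<and>
     (\<forall>U V. submod L M U \<and> submod L M V \<and> U \<inter> V = {\<zero>\<^bsub>M\<^esub>} \<and>
        {x \<oplus>\<^bsub>M\<^esub> y | x y. x \<in> U \<and> y \<in> V} = carrier M \<longrightarrow>
        U = {\<zero>\<^bsub>M\<^esub>} \<or> V = {\<zero>\<^bsub>M\<^esub>})"

definition left_minimal :: "'r ring \<Rightarrow> ('r, 'a) module \<Rightarrow> ('r, 'b) module \<Rightarrow> ('a \<Rightarrow> 'b) \<Rightarrow> bool" where
  "left_minimal L A B g \<longleftrightarrow>
     (\<forall>h. lhom L B B h \<and> (\<forall>x\<in>carrier A. h (g x) = g x) \<longrightarrow> bij_betw h (carrier B) (carrier B))"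

definition right_minimal :: "'r ring \<Rightarrow> ('r, 'b) module \<Rightarrow> ('r, 'c) module \<Rightarrow> ('b \<Rightarrow> 'c) \<Rightarrow> bool" where
  "right_minimal L B C f \<longleftrightarrow>
     (\<forall>h. lhom L B B h \<and> (\<forall>x\<in>carrier B. f (h x) = f x) \<longrightarrow> bij_betw h (carrier B) (carrier B))"

definition short_exact :: "'r ring \<Rightarrow> ('r, 'a) module \<Rightarrow> ('r, 'b) module \<Rightarrow> ('r, 'c) module \<Rightarrow>
    ('a \<Rightarrow> 'b) \<Rightarrow> ('b \<Rightarrow> 'c) \<Rightarrow> bool" where
  "short_exact L A B C g f \<longleftrightarrow> lhom L A B g \<and> lhom L B C f \<and> inj_on g (carrier A) \<and>
     f ` carrier B = carrier C \<and> g ` carrier A = {y \<in> carrier B. f y = \<zero>\<^bsub>C\<^esub>}"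

definition ses_splits :: "'r ring \<Rightarrow> ('r, 'b) module \<Rightarrow> ('r, 'c) module \<Rightarrow> ('b \<Rightarrow> 'c) \<Rightarrow> bool" where
  "ses_splits L B C f \<longleftrightarrow> (\<exists>s. lhom L C B s \<and> (\<forall>z\<in>carrier C. f (s z) = z))"

end

theory Submission
  imports Defs
begin

locale lmod =
  fixes L and M (structure)
  assumes lm: "lmodule L M"
begin

lemma ringL: "ring L" using lm unfolding lmodule_def by auto
lemma agX: "abelian_group M" using lm unfolding lmodule_def by auto

sublocale L: ring L by (rule ringL)
sublocale abelian_group M by (rule agX)

lemma sm_closed[simp,intro]: "a \<in> carrier L \<Longrightarrow> x \<in> carrier M \<Longrightarrow> a \<odot> x \<in> carrier M"
  using lm unfolding lmodule_def by auto
lemma sm_ldistr: "a \<in> carrier L \<Longrightarrow> b \<in> carrier L \<Longrightarrow> x \<in> carrier M \<Longrightarrow> (a \<oplus>\<^bsub>L\<^esub> b) \<odot> x = a \<odot> x \<oplus> b \<odot> x"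
  using lm unfolding lmodule_def by auto
lemma sm_rdistr: "a \<in> carrier L \<Longrightarrow> x \<in> carrier M \<Longrightarrow> y \<in> carrier M \<Longrightarrow> a \<odot> (x \<oplus> y) = a \<odot> x \<oplus> a \<odot> y"
  using lm unfolding lmodule_def by auto
lemma sm_assoc: "a \<in> carrier L \<Longrightarrow> b \<in> carrier L \<Longrightarrow> x \<in> carrier M \<Longrightarrow> (a \<otimes>\<^bsub>L\<^esub> b) \<odot> x = a \<odot> (b \<odot> x)"
  using lm unfolding lmodule_def by auto
lemma sm_one[simp]: "x \<in> carrier M \<Longrightarrow> \<one>\<^bsub>L\<^esub> \<odot> x = x"
  using lm unfolding lmodule_def by auto

lemma sm_zero_r[simp]: "a \<in> carrier L \<Longrightarrow> a \<odot> \<zero> = \<zero>"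
proof -
  assume a: "a \<in> carrier L"
  have "a \<odot> \<zero> = a \<odot> \<zero> \<oplus> a \<odot> \<zero>" using sm_rdistr[OF a, of \<zero> \<zero>] by simp
  thus ?thesis using a by (metis add.r_cancel_one' sm_closed zero_closed)
qed

lemma sm_zero_l[simp]: "x \<in> carrier M \<Longrightarrow> \<zero>\<^bsub>L\<^esub> \<odot> x = \<zero>"
proof -
  assume x: "x \<in> carrier M"
  have "\<zero>\<^bsub>L\<^esub> \<odot> x = \<zero>\<^bsub>L\<^esub> \<odot> x \<oplus> \<zero>\<^bsub>L\<^esub> \<odot> x" using sm_ldistr[of "\<zero>\<^bsub>L\<^esub>" "\<zero>\<^bsub>L\<^esub>" x] x by simp
  thus ?thesis using x by (metis add.r_cancel_one' sm_closed L.zero_closed zero_closed)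
qed

lemma sm_neg: "a \<in> carrier L \<Longrightarrow> x \<in> carrier M \<Longrightarrow> (\<ominus>\<^bsub>L\<^esub> a) \<odot> x = \<ominus> (a \<odot> x)"
proof -
  assume a: "a \<in> carrier L" and x: "x \<in> carrier M"
  have "(\<ominus>\<^bsub>L\<^esub> a) \<odot> x \<oplus> a \<odot> x = \<zero>"
    using sm_ldistr[of "\<ominus>\<^bsub>L\<^esub> a" a x] a x by (simp add: L.l_neg)
  thus ?thesis using a x by (metis L.a_inv_closed minus_equality sm_closed)
qed

lemma sm_finsum: "finite I \<Longrightarrow> a \<in> carrier L \<Longrightarrow> f \<in> I \<rightarrow> carrier M \<Longrightarrow>
   a \<odot> finsum M f I = finsum M (\<lambda>i. a \<odot> f i) I"
proof (induct I rule: finite_induct)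
  case empty then show ?case by simp
next
  case (insert i I) then show ?case by (simp add: finsum_insert sm_rdistr finsum_closed Pi_def)
qed

end

lemma lhom_closed: "lhom L M N h \<Longrightarrow> x \<in> carrier M \<Longrightarrow> h x \<in> carrier N"
  unfolding lhom_def by auto
lemma lhom_add: "lhom L M N h \<Longrightarrow> x \<in> carrier M \<Longrightarrow> y \<in> carrier M \<Longrightarrow> h (x \<oplus>\<^bsub>M\<^esub> y) = h x \<oplus>\<^bsub>N\<^esub> h y"
  unfolding lhom_def by auto
lemma lhom_smult: "lhom L M N h \<Longrightarrow> a \<in> carrier L \<Longrightarrow> x \<in> carrier M \<Longrightarrow> h (a \<odot>\<^bsub>M\<^esub> x) = a \<odot>\<^bsub>N\<^esub> h x"
  unfolding lhom_def by auto

lemma lhom_zero: assumes "lmodule L M" "lmodule L N" "lhom L M N h" shows "h \<zero>\<^bsub>M\<^esub> = \<zero>\<^bsub>N\<^esub>"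
proof -
  interpret M: lmod L M by (unfold_locales, fact)
  interpret N: lmod L N by (unfold_locales, fact)
  have "h \<zero>\<^bsub>M\<^esub> = h \<zero>\<^bsub>M\<^esub> \<oplus>\<^bsub>N\<^esub> h \<zero>\<^bsub>M\<^esub>" using lhom_add[OF assms(3), of "\<zero>\<^bsub>M\<^esub>" "\<zero>\<^bsub>M\<^esub>"] by simp
  thus ?thesis using lhom_closed[OF assms(3) M.zero_closed] by (metis N.add.r_cancel_one' N.zero_closed)
qed

lemma lhom_neg: assumes "lmodule L M" "lmodule L N" "lhom L M N h" "x \<in> carrier M"
  shows "h (\<ominus>\<^bsub>M\<^esub> x) = \<ominus>\<^bsub>N\<^esub> h x"
proof -
  interpret M: lmod L M by (unfold_locales, fact)
  interpret N: lmod L N by (unfold_locales, fact)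
  have "h (\<ominus>\<^bsub>M\<^esub> x) \<oplus>\<^bsub>N\<^esub> h x = \<zero>\<^bsub>N\<^esub>"
    using lhom_add[OF assms(3), of "\<ominus>\<^bsub>M\<^esub> x" x] assms(4) lhom_zero[OF assms(1-3)] by (simp add: M.l_neg)
  thus ?thesis using assms(4) lhom_closed[OF assms(3)] by (metis M.a_inv_closed N.minus_equality)
qed

lemma lhom_minus: assumes "lmodule L M" "lmodule L N" "lhom L M N h" "x \<in> carrier M" "y \<in> carrier M"
  shows "h (x \<ominus>\<^bsub>M\<^esub> y) = h x \<ominus>\<^bsub>N\<^esub> h y"
proof -
  interpret M: lmod L M by (unfold_locales, fact)
  interpret N: lmod L N by (unfold_locales, fact)
  show ?thesis using assms lhom_add[OF assms(3)] lhom_neg[OF assms(1-3)] by (simp add: a_minus_def)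
qed

lemma lhom_finsum: assumes "lmodule L M" "lmodule L N" "lhom L M N h" "finite I" "f \<in> I \<rightarrow> carrier M"
  shows "h (finsum M f I) = finsum N (\<lambda>i. h (f i)) I"
  using assms(4,5)
proof (induct I rule: finite_induct)
  case empty
  interpret M: lmod L M by (unfold_locales, fact)
  interpret N: lmod L N by (unfold_locales, fact)
  show ?case using lhom_zero[OF assms(1-3)] by simp
next
  case (insert i I)
  interpret M: lmod L M by (unfold_locales, fact)
  interpret N: lmod L N by (unfold_locales, fact)
  from insert show ?case using lhom_add[OF assms(3)] lhom_closed[OF assms(3)]
    by (simp add: M.finsum_insert N.finsum_insert M.finsum_closed Pi_def)
qed

lemma lhom_comp: "lhom L M N h \<Longrightarrow> lhom L N P k \<Longrightarrow> lhom L M P (\<lambda>x. k (h x))"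
  unfolding lhom_def by (auto simp: Pi_def)

lemma lhom_id: "lhom L M M (\<lambda>x. x)" unfolding lhom_def by auto

lemma lhom_cong: "lmodule L M \<Longrightarrow> lhom L M N h \<Longrightarrow> (\<And>x. x \<in> carrier M \<Longrightarrow> h x = k x) \<Longrightarrow> lhom L M N k"
proof -
  assume a: "lmodule L M" "lhom L M N h" "\<And>x. x \<in> carrier M \<Longrightarrow> h x = k x"
  interpret M: lmod L M by (unfold_locales, fact)
  show ?thesis using a unfolding lhom_def Pi_def by auto
qed

lemma lhom_inv: assumes "lmodule L M" "lmodule L N" "lhom L M N h" "bij_betw h (carrier M) (carrier N)"
  shows "lhom L N M (the_inv_into (carrier M) h)"
proof -
  interpret M: lmod L M by (unfold_locales, fact)
  interpret N: lmod L N by (unfold_locales, fact)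
  let ?i = "the_inv_into (carrier M) h"
  have inj: "inj_on h (carrier M)" and sur: "h ` carrier M = carrier N" using assms(4) unfolding bij_betw_def by auto
  have ic: "y \<in> carrier N \<Longrightarrow> ?i y \<in> carrier M" for y by (metis inj sur the_inv_into_into subset_refl)
  have hi: "y \<in> carrier N \<Longrightarrow> h (?i y) = y" for y by (metis f_the_inv_into_f inj sur)
  have ih: "x \<in> carrier M \<Longrightarrow> ?i (h x) = x" for x by (metis the_inv_into_f_f inj)
  show ?thesis unfolding lhom_def
  proof (intro conjI ballI)
    show "?i \<in> carrier N \<rightarrow> carrier M" using ic by auto
  next
    fix x y assume "x \<in> carrier N" "y \<in> carrier N"
    thus "?i (x \<oplus>\<^bsub>N\<^esub> y) = ?i x \<oplus>\<^bsub>M\<^esub> ?i y"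
      by (metis M.a_closed hi ic ih lhom_add[OF assms(3)])
  next
    fix a x assume "a \<in> carrier L" "x \<in> carrier N"
    thus "?i (a \<odot>\<^bsub>N\<^esub> x) = a \<odot>\<^bsub>M\<^esub> ?i x"
      by (metis M.sm_closed hi ic ih lhom_smult[OF assms(3)])
  qed
qed



definition subm :: "'k ring \<Rightarrow> ('k,'y) module \<Rightarrow> 'y set \<Rightarrow> bool" where
  "subm R Y U \<longleftrightarrow> U \<subseteq> carrier Y \<and> \<zero>\<^bsub>Y\<^esub> \<in> U \<and> (\<forall>x\<in>U. \<forall>y\<in>U. x \<oplus>\<^bsub>Y\<^esub> y \<in> U)
     \<and> (\<forall>r\<in>carrier R. \<forall>x\<in>U. r \<odot>\<^bsub>Y\<^esub> x \<in> U)"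

definition dcc :: "'k ring \<Rightarrow> ('k,'y) module \<Rightarrow> bool" where
  "dcc R Y \<longleftrightarrow> (\<forall>N :: nat \<Rightarrow> 'y set. (\<forall>n. subm R Y (N n) \<and> N (Suc n) \<subseteq> N n) \<longrightarrow> (\<exists>m. \<forall>n\<ge>m. N n = N m))"

definition fsub :: "'k ring \<Rightarrow> ('k,'y) module \<Rightarrow> 'i set \<Rightarrow> ('i \<Rightarrow> 'y) set \<Rightarrow> bool" where
  "fsub R Y I U \<longleftrightarrow> U \<subseteq> (I \<rightarrow>\<^sub>E carrier Y) \<and> (\<lambda>i\<in>I. \<zero>\<^bsub>Y\<^esub>) \<in> U
     \<and> (\<forall>v\<in>U. \<forall>w\<in>U. (\<lambda>i\<in>I. v i \<oplus>\<^bsub>Y\<^esub> w i) \<in> U)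
     \<and> (\<forall>r\<in>carrier R. \<forall>v\<in>U. (\<lambda>i\<in>I. r \<odot>\<^bsub>Y\<^esub> v i) \<in> U)"

definition fdcc :: "'k ring \<Rightarrow> ('k,'y) module \<Rightarrow> 'i set \<Rightarrow> bool" where
  "fdcc R Y I \<longleftrightarrow> (\<forall>N :: nat \<Rightarrow> ('i \<Rightarrow> 'y) set. (\<forall>n. fsub R Y I (N n) \<and> N (Suc n) \<subseteq> N n) \<longrightarrow> (\<exists>m. \<forall>n\<ge>m. N n = N m))"

lemma chain_mono: "(\<And>n. N (Suc n) \<subseteq> N n) \<Longrightarrow> m \<le> n \<Longrightarrow> N n \<subseteq> N m"
  by (rule lift_Suc_antimono_le)

lemma G_lemma:
  assumes mod: "module R Y" and d: "dcc R Y" and fin: "finite I"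
  shows "fdcc R Y I"
  using fin
proof (induct I rule: finite_induct)
  case empty
  show ?case unfolding fdcc_def
  proof (intro allI impI)
    fix N assume ch: "\<forall>n. fsub R Y {} (N n) \<and> N (Suc n) \<subseteq> N n"
    have "N n = {\<lambda>_. undefined}" for n using ch[rule_format, of n] unfolding fsub_def by auto
    thus "\<exists>m. \<forall>n\<ge>m. N n = N m" by auto
  qed
next
  case (insert s I)
  interpret module R Y by (rule mod)
  show ?case unfolding fdcc_def
  proof (intro allI impI)
    fix N assume ch: "\<forall>n. fsub R Y (insert s I) (N n) \<and> N (Suc n) \<subseteq> N n"
    have fs: "fsub R Y (insert s I) (N n)" for n using ch by auto
    have dec: "N (Suc n) \<subseteq> N n" for n using ch by auto
    have NE: "v \<in> N n \<Longrightarrow> v \<in> insert s I \<rightarrow>\<^sub>E carrier Y" for v n using fs[of n] unfolding fsub_def by auto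
    define P where "P n = (\<lambda>v. v s) ` N n" for n
    have "subm R Y (P n)" for n
      unfolding subm_def P_def
    proof (intro conjI ballI)
      show "(\<lambda>v. v s) ` N n \<subseteq> carrier Y" using NE by auto
      show "\<zero>\<^bsub>Y\<^esub> \<in> (\<lambda>v. v s) ` N n" using fs[of n] unfolding fsub_def by (auto intro!: image_eqI[where x="\<lambda>i\<in>insert s I. \<zero>\<^bsub>Y\<^esub>"])
    next
      fix x y assume "x \<in> (\<lambda>v. v s) ` N n" "y \<in> (\<lambda>v. v s) ` N n"
      then obtain v w where "v \<in> N n" "w \<in> N n" "x = v s" "y = w s" by auto
      thus "x \<oplus>\<^bsub>Y\<^esub> y \<in> (\<lambda>v. v s) ` N n" using fs[of n] unfolding fsub_def
        by (auto intro!: image_eqI[where x="\<lambda>i\<in>insert s I. v i \<oplus>\<^bsub>Y\<^esub> w i"])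
    next
      fix r x assume "r \<in> carrier R" "x \<in> (\<lambda>v. v s) ` N n"
      then obtain v where "v \<in> N n" "x = v s" by auto
      thus "r \<odot>\<^bsub>Y\<^esub> x \<in> (\<lambda>v. v s) ` N n" using fs[of n] \<open>r \<in> carrier R\<close> unfolding fsub_def
        by (auto intro!: image_eqI[where x="\<lambda>i\<in>insert s I. r \<odot>\<^bsub>Y\<^esub> v i"])
    qed
    moreover have "P (Suc n) \<subseteq> P n" for n unfolding P_def using dec by auto
    ultimately obtain m1 where m1: "\<forall>n\<ge>m1. P n = P m1" using d unfolding dcc_def by meson
    define Q where "Q n = (\<lambda>v. restrict v I) ` {v \<in> N n. v s = \<zero>\<^bsub>Y\<^esub>}" for n
    have "fsub R Y I (Q n)" for n
      unfolding fsub_def Q_def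
    proof (intro conjI ballI)
      show "(\<lambda>v. restrict v I) ` {v \<in> N n. v s = \<zero>\<^bsub>Y\<^esub>} \<subseteq> I \<rightarrow>\<^sub>E carrier Y" using NE by fastforce
      show "(\<lambda>i\<in>I. \<zero>\<^bsub>Y\<^esub>) \<in> (\<lambda>v. restrict v I) ` {v \<in> N n. v s = \<zero>\<^bsub>Y\<^esub>}" using fs[of n] unfolding fsub_def
        by (auto intro!: image_eqI[where x="\<lambda>i\<in>insert s I. \<zero>\<^bsub>Y\<^esub>"])
    next
      fix v w assume "v \<in> (\<lambda>v. restrict v I) ` {v \<in> N n. v s = \<zero>\<^bsub>Y\<^esub>}" "w \<in> (\<lambda>v. restrict v I) ` {v \<in> N n. v s = \<zero>\<^bsub>Y\<^esub>}"
      then obtain v' w' where "v' \<in> N n" "w' \<in> N n" "v' s = \<zero>\<^bsub>Y\<^esub>" "w' s = \<zero>\<^bsub>Y\<^esub>" "v = restrict v' I" "w = restrict w' I" by auto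
      thus "(\<lambda>i\<in>I. v i \<oplus>\<^bsub>Y\<^esub> w i) \<in> (\<lambda>v. restrict v I) ` {v \<in> N n. v s = \<zero>\<^bsub>Y\<^esub>}" using fs[of n] unfolding fsub_def
        by (auto intro!: image_eqI[where x="\<lambda>i\<in>insert s I. v' i \<oplus>\<^bsub>Y\<^esub> w' i"])
    next
      fix r v assume r: "r \<in> carrier R" and "v \<in> (\<lambda>v. restrict v I) ` {v \<in> N n. v s = \<zero>\<^bsub>Y\<^esub>}"
      then obtain v' where "v' \<in> N n" "v' s = \<zero>\<^bsub>Y\<^esub>" "v = restrict v' I" by auto
      thus "(\<lambda>i\<in>I. r \<odot>\<^bsub>Y\<^esub> v i) \<in> (\<lambda>v. restrict v I) ` {v \<in> N n. v s = \<zero>\<^bsub>Y\<^esub>}" using fs[of n] r unfolding fsub_def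
        by (auto intro!: image_eqI[where x="\<lambda>i\<in>insert s I. r \<odot>\<^bsub>Y\<^esub> v' i"])
    qed
    moreover have "Q (Suc n) \<subseteq> Q n" for n unfolding Q_def using dec by auto
    ultimately obtain m2 where m2: "\<forall>n\<ge>m2. Q n = Q m2" using insert(3) unfolding fdcc_def by meson
    define m where "m = max m1 m2"
    have "\<forall>n\<ge>m. N n = N m"
    proof (intro allI impI)
      fix n assume nm: "m \<le> n"
      have sub1: "N n \<subseteq> N m" using chain_mono[of N m n] dec nm by auto
      have "N m \<subseteq> N n"
      proof
        fix x assume xm: "x \<in> N m"
        have "P m = P n" using m1 nm unfolding m_def by (metis max.cobounded1 order_trans)
        hence "x s \<in> P n" using xm unfolding P_def by auto
        then obtain y where yn: "y \<in> N n" and ys: "y s = x s" unfolding P_def by auto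
        have ym: "y \<in> N m" using yn sub1 by auto
        have xE: "x \<in> insert s I \<rightarrow>\<^sub>E carrier Y" and yE: "y \<in> insert s I \<rightarrow>\<^sub>E carrier Y" using NE xm ym by auto
        define y' where "y' = (\<lambda>i\<in>insert s I. (\<ominus>\<^bsub>R\<^esub> \<one>\<^bsub>R\<^esub>) \<odot>\<^bsub>Y\<^esub> y i)"
        have y'm: "y' \<in> N m" using fs[of m] ym unfolding fsub_def y'_def by auto
        define d where "d = (\<lambda>i\<in>insert s I. x i \<oplus>\<^bsub>Y\<^esub> y' i)"
        have dm: "d \<in> N m" using fs[of m] xm y'm unfolding fsub_def d_def by auto
        have y'i: "i \<in> insert s I \<Longrightarrow> y' i = \<ominus>\<^bsub>Y\<^esub> y i" for i
          using yE unfolding y'_def by (auto simp: smult_l_minus PiE_def Pi_def)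
        have ds: "d s = \<zero>\<^bsub>Y\<^esub>" unfolding d_def using y'i[of s] ys xE by (auto simp: PiE_def Pi_def r_neg)
        have "restrict d I \<in> Q m" unfolding Q_def using dm ds by auto
        moreover have "Q m = Q n" using m2 nm unfolding m_def by (metis max.cobounded2 order_trans)
        ultimately have "restrict d I \<in> Q n" by simp
        then obtain w where wn: "w \<in> N n" and ws: "w s = \<zero>\<^bsub>Y\<^esub>" and wd: "restrict w I = restrict d I" unfolding Q_def by auto
        have "w = d"
        proof (rule ext)
          fix i show "w i = d i"
          proof (cases "i \<in> insert s I")
            case True thus ?thesis using ws ds wd by (metis insertE restrict_apply')
          next
            case False thus ?thesis using NE[OF wn] unfolding d_def by (auto simp: PiE_def extensional_def)
          qed
        qed
        hence dn: "d \<in> N n" using wn by simp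
        have "x = (\<lambda>i\<in>insert s I. d i \<oplus>\<^bsub>Y\<^esub> y i)"
        proof (rule ext)
          fix i show "x i = (\<lambda>i\<in>insert s I. d i \<oplus>\<^bsub>Y\<^esub> y i) i"
          proof (cases "i \<in> insert s I")
            case True
            have xi: "x i \<in> carrier Y" and yi: "y i \<in> carrier Y" using xE yE True by auto
            have "d i \<oplus>\<^bsub>Y\<^esub> y i = x i \<oplus>\<^bsub>Y\<^esub> \<ominus>\<^bsub>Y\<^esub> y i \<oplus>\<^bsub>Y\<^esub> y i" unfolding d_def using True y'i by simp
            also have "\<dots> = x i" using xi yi by (simp add: a_assoc l_neg)
            finally show ?thesis using True by simp
          next
            case False thus ?thesis using xE by (auto simp: PiE_def extensional_def)
          qed
        qed
        thus "x \<in> N n" using fs[of n] dn yn unfolding fsub_def by auto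
      qed
      thus "N n = N m" using sub1 by auto
    qed
    thus "\<exists>m. \<forall>n\<ge>m. N n = N m" by blast
  qed
qed

lemma PL_lemma:
  assumes modY: "module R Y" and modX: "module R Z" and fd: "fdcc R Y I"
    and Tc: "\<And>v. v \<in> I \<rightarrow>\<^sub>E carrier Y \<Longrightarrow> T v \<in> carrier Z"
    and Tadd: "\<And>v w. v \<in> I \<rightarrow>\<^sub>E carrier Y \<Longrightarrow> w \<in> I \<rightarrow>\<^sub>E carrier Y \<Longrightarrow>
        T (\<lambda>i\<in>I. v i \<oplus>\<^bsub>Y\<^esub> w i) = T v \<oplus>\<^bsub>Z\<^esub> T w"
    and Tsm: "\<And>r v. r \<in> carrier R \<Longrightarrow> v \<in> I \<rightarrow>\<^sub>E carrier Y \<Longrightarrow>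
        T (\<lambda>i\<in>I. r \<odot>\<^bsub>Y\<^esub> v i) = r \<odot>\<^bsub>Z\<^esub> T v"
    and Tsurj: "\<And>x. x \<in> carrier Z \<Longrightarrow> \<exists>v\<in>I \<rightarrow>\<^sub>E carrier Y. T v = x"
  shows "dcc R Z"
proof -
  interpret Y: module R Y by (rule modY)
  interpret Z: module R Z by (rule modX)
  let ?z = "\<lambda>i\<in>I. \<zero>\<^bsub>Y\<^esub>"
  have zE: "?z \<in> I \<rightarrow>\<^sub>E carrier Y" by auto
  have "(\<lambda>i\<in>I. ?z i \<oplus>\<^bsub>Y\<^esub> ?z i) = ?z" by auto
  hence "T ?z = T ?z \<oplus>\<^bsub>Z\<^esub> T ?z" using Tadd[OF zE zE] by simp
  hence Tz: "T ?z = \<zero>\<^bsub>Z\<^esub>" using Tc[OF zE] by (metis Z.add.r_cancel_one' Z.zero_closed)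
  show ?thesis unfolding dcc_def
  proof (intro allI impI)
    fix N assume ch: "\<forall>n. subm R Z (N n) \<and> N (Suc n) \<subseteq> N n"
    define M where "M n = {v \<in> I \<rightarrow>\<^sub>E carrier Y. T v \<in> N n}" for n
    have "fsub R Y I (M n)" for n
      using ch[rule_format, of n] Tadd Tsm Tz unfolding fsub_def subm_def M_def by auto
    moreover have "M (Suc n) \<subseteq> M n" for n using ch unfolding M_def by auto
    ultimately obtain m where m: "\<forall>n\<ge>m. M n = M m" using fd unfolding fdcc_def by meson
    have NM: "N n = T ` M n" for n
    proof
      show "N n \<subseteq> T ` M n"
      proof
        fix x assume "x \<in> N n"
        moreover hence "x \<in> carrier Z" using ch unfolding subm_def by auto
        ultimately show "x \<in> T ` M n" using Tsurj unfolding M_def by force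
      qed
    qed (auto simp: M_def)
    show "\<exists>m. \<forall>n\<ge>m. N n = N m" using m NM by metis
  qed
qed

definition Rmod :: "'k ring \<Rightarrow> ('k,'k) module" where
  "Rmod R = \<lparr>carrier = carrier R, monoid.mult = monoid.mult R, one = \<one>\<^bsub>R\<^esub>, ring.zero = \<zero>\<^bsub>R\<^esub>, ring.add = add R, smult = monoid.mult R\<rparr>"

lemma Rmod_simps[simp]: "carrier (Rmod R) = carrier R" "x \<oplus>\<^bsub>Rmod R\<^esub> y = x \<oplus>\<^bsub>R\<^esub> y" "\<zero>\<^bsub>Rmod R\<^esub> = \<zero>\<^bsub>R\<^esub>"
  "a \<odot>\<^bsub>Rmod R\<^esub> x = a \<otimes>\<^bsub>R\<^esub> x"
  by (simp_all add: Rmod_def)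

lemma Rmod_ag: assumes "abelian_group R" shows "abelian_group (Rmod R)"
proof -
  interpret abelian_group R by fact
  show ?thesis by (rule abelian_groupI) (auto simp: a_ac intro: l_neg)
qed

lemma Rmod_module: assumes "cring R" shows "module R (Rmod R)"
proof -
  interpret cring R by fact
  show ?thesis
    by (rule moduleI) (auto simp: assms Rmod_ag is_abelian_group l_distr r_distr m_assoc)
qed

lemma Rmod_dcc: assumes "artinian_cring R" shows "dcc R (Rmod R)"
  unfolding dcc_def
proof (intro allI impI)
  fix N assume ch: "\<forall>n. subm R (Rmod R) (N n) \<and> N (Suc n) \<subseteq> N n"
  have cr: "cring R" using assms unfolding artinian_cring_def by auto
  interpret cring R by (rule cr)
  have "ideal (N n) R" for n
  proof -
    have s: "subm R (Rmod R) (N n)" using ch by auto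
    hence sub: "N n \<subseteq> carrier R" and z: "\<zero>\<^bsub>R\<^esub> \<in> N n" and a: "\<And>x y. x \<in> N n \<Longrightarrow> y \<in> N n \<Longrightarrow> x \<oplus>\<^bsub>R\<^esub> y \<in> N n"
      and sm: "\<And>r x. r \<in> carrier R \<Longrightarrow> x \<in> N n \<Longrightarrow> r \<otimes>\<^bsub>R\<^esub> x \<in> N n" unfolding subm_def by auto
    have neg: "x \<in> N n \<Longrightarrow> \<ominus>\<^bsub>R\<^esub> x \<in> N n" for x
      using sm[of "\<ominus>\<^bsub>R\<^esub> \<one>\<^bsub>R\<^esub>" x] sub by (metis l_minus l_one one_closed a_inv_closed subsetD)
    show ?thesis
    proof (rule idealI)
      show "ring R" by (rule ring_axioms)
      show "subgroup (N n) (add_monoid R)"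
        by (rule subgroup.intro) (use sub z a neg in \<open>auto simp: a_inv_def\<close>)
      show "\<And>a x. a \<in> N n \<Longrightarrow> x \<in> carrier R \<Longrightarrow> x \<otimes>\<^bsub>R\<^esub> a \<in> N n" using sm by auto
      show "\<And>a x. a \<in> N n \<Longrightarrow> x \<in> carrier R \<Longrightarrow> a \<otimes>\<^bsub>R\<^esub> x \<in> N n" using sm sub by (metis m_comm subsetD)
    qed
  qed
  thus "\<exists>m. \<forall>n\<ge>m. N n = N m" using assms ch unfolding artinian_cring_def by blast
qed



definition toR :: "('k \<Rightarrow> 'r) \<Rightarrow> ('r,'m) module \<Rightarrow> ('k,'m) module" where
  "toR phi M = \<lparr>carrier = carrier M, monoid.mult = monoid.mult M, one = \<one>\<^bsub>M\<^esub>, ring.zero = \<zero>\<^bsub>M\<^esub>,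
     ring.add = add M, smult = (\<lambda>r x. phi r \<odot>\<^bsub>M\<^esub> x)\<rparr>"

lemma toR_simps[simp]: "carrier (toR phi M) = carrier M" "x \<oplus>\<^bsub>toR phi M\<^esub> y = x \<oplus>\<^bsub>M\<^esub> y"
  "\<zero>\<^bsub>toR phi M\<^esub> = \<zero>\<^bsub>M\<^esub>" "r \<odot>\<^bsub>toR phi M\<^esub> x = phi r \<odot>\<^bsub>M\<^esub> x"
  by (simp_all add: toR_def)

lemma toR_finsum[simp]: "finsum (toR phi M) f I = finsum M f I"
  by (simp add: finsum_def finprod_def toR_def)

definition Lmod :: "'r ring \<Rightarrow> ('r,'r) module" where
  "Lmod L = \<lparr>carrier = carrier L, monoid.mult = monoid.mult L, one = \<one>\<^bsub>L\<^esub>, ring.zero = \<zero>\<^bsub>L\<^esub>,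
     ring.add = add L, smult = monoid.mult L\<rparr>"

lemma Lmod_simps[simp]: "carrier (Lmod L) = carrier L" "x \<oplus>\<^bsub>Lmod L\<^esub> y = x \<oplus>\<^bsub>L\<^esub> y"
  "\<zero>\<^bsub>Lmod L\<^esub> = \<zero>\<^bsub>L\<^esub>" "a \<odot>\<^bsub>Lmod L\<^esub> x = a \<otimes>\<^bsub>L\<^esub> x"
  by (simp_all add: Lmod_def)

lemma Lmod_lmodule: assumes "ring L" shows "lmodule L (Lmod L)"
proof -
  interpret ring L by fact
  have "abelian_group (Lmod L)" by (rule abelian_groupI) (auto simp: a_ac intro: l_neg)
  thus ?thesis unfolding lmodule_def using assms by (auto simp: l_distr r_distr m_assoc)
qed

lemma toR_module: assumes "lmodule L M" "cring R" "phi \<in> ring_hom R L"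
  shows "module R (toR phi M)"
proof -
  interpret M: lmod L M by (unfold_locales, fact)
  interpret cring R by fact
  have ag: "abelian_group (toR phi M)" by (rule abelian_groupI) (auto simp: M.a_ac intro: M.l_neg)
  have pc: "r \<in> carrier R \<Longrightarrow> phi r \<in> carrier L" for r using ring_hom_closed[OF assms(3)] by auto
  show ?thesis
    apply (rule moduleI[OF assms(2) ag])
    using pc ring_hom_add[OF assms(3)] ring_hom_mult[OF assms(3)] ring_hom_one[OF assms(3)]
    by (auto simp: M.sm_ldistr M.sm_rdistr M.sm_assoc)
qed

definition fgL :: "'r ring \<Rightarrow> ('r,'m) module \<Rightarrow> 'i set \<Rightarrow> ('i \<Rightarrow> 'm) \<Rightarrow> bool" where
  "fgL L M I gen \<longleftrightarrow> finite I \<and> gen \<in> I \<rightarrow> carrier M \<and>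
     (\<forall>x\<in>carrier M. \<exists>c\<in>I \<rightarrow> carrier L. x = finsum M (\<lambda>i. c i \<odot>\<^bsub>M\<^esub> gen i) I)"

lemma fg_fgL: "fg_lmodule L M \<Longrightarrow> \<exists>S. fgL L M S (\<lambda>x. x)"
proof -
  assume "fg_lmodule L M"
  then obtain S where "finite S" "S \<subseteq> carrier M" "\<forall>x\<in>carrier M. \<exists>c. c \<in> S \<rightarrow> carrier L \<and> x = finsum M (\<lambda>s. c s \<odot>\<^bsub>M\<^esub> s) S"
    unfolding fg_lmodule_def by blast
  thus ?thesis unfolding fgL_def by (intro exI[of _ S]) blast
qed

lemma dcc_L:
  assumes aa: "artin_algebra R phi L" and lm: "lmodule L M" and fg: "fgL L M I gen"
  shows "dcc R (toR phi M)"
proof -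
  have art: "artinian_cring R" and cr: "cring R" and rL: "ring L" and ph: "phi \<in> ring_hom R L"
    using aa unfolding artin_algebra_def artinian_cring_def by auto
  obtain S where S: "finite S" "S \<subseteq> carrier L"
    "\<forall>x\<in>carrier L. \<exists>c. c \<in> S \<rightarrow> carrier R \<and> x = finsum L (\<lambda>s. phi (c s) \<otimes>\<^bsub>L\<^esub> s) S"
    using aa unfolding artin_algebra_def by auto
  interpret R: cring R by (rule cr)
  interpret L: ring L by (rule rL)
  interpret M: lmod L M by (unfold_locales, rule lm)
  have pc: "r \<in> carrier R \<Longrightarrow> phi r \<in> carrier L" for r using ring_hom_closed[OF ph] by auto
  have d1: "dcc R (Rmod R)" by (rule Rmod_dcc[OF art])
  have f1: "fdcc R (Rmod R) S" by (rule G_lemma[OF Rmod_module[OF cr] d1 S(1)])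
  have LL: "lmodule L (Lmod L)" by (rule Lmod_lmodule[OF rL])
  have d2: "dcc R (toR phi (Lmod L))"
  proof (rule PL_lemma[OF Rmod_module[OF cr] toR_module[OF LL cr ph] f1, where T="\<lambda>v. finsum L (\<lambda>s. phi (v s) \<otimes>\<^bsub>L\<^esub> s) S"])
    fix v assume v: "v \<in> S \<rightarrow>\<^sub>E carrier (Rmod R)"
    show "finsum L (\<lambda>s. phi (v s) \<otimes>\<^bsub>L\<^esub> s) S \<in> carrier (toR phi (Lmod L))"
      using v S(2) pc by (auto intro!: L.finsum_closed simp: Pi_def PiE_def subset_iff)
  next
    fix v w assume v: "v \<in> S \<rightarrow>\<^sub>E carrier (Rmod R)" and w: "w \<in> S \<rightarrow>\<^sub>E carrier (Rmod R)"
    have "finsum L (\<lambda>s. phi ((\<lambda>i\<in>S. v i \<oplus>\<^bsub>Rmod R\<^esub> w i) s) \<otimes>\<^bsub>L\<^esub> s) S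
        = finsum L (\<lambda>s. phi (v s) \<otimes>\<^bsub>L\<^esub> s \<oplus>\<^bsub>L\<^esub> phi (w s) \<otimes>\<^bsub>L\<^esub> s) S"
      apply (rule L.finsum_cong')
      using v w S(2) pc ring_hom_add[OF ph] by (auto simp: L.l_distr subset_iff PiE_def Pi_def)
    also have "\<dots> = finsum L (\<lambda>s. phi (v s) \<otimes>\<^bsub>L\<^esub> s) S \<oplus>\<^bsub>L\<^esub> finsum L (\<lambda>s. phi (w s) \<otimes>\<^bsub>L\<^esub> s) S"
      apply (rule L.finsum_addf)
      using v w S(2) pc by (auto simp: subset_iff PiE_def Pi_def)
    finally show "finsum L (\<lambda>s. phi ((\<lambda>i\<in>S. v i \<oplus>\<^bsub>Rmod R\<^esub> w i) s) \<otimes>\<^bsub>L\<^esub> s) S =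
       finsum L (\<lambda>s. phi (v s) \<otimes>\<^bsub>L\<^esub> s) S \<oplus>\<^bsub>toR phi (Lmod L)\<^esub> finsum L (\<lambda>s. phi (w s) \<otimes>\<^bsub>L\<^esub> s) S"
      by simp
  next
    fix r v assume r: "r \<in> carrier R" and v: "v \<in> S \<rightarrow>\<^sub>E carrier (Rmod R)"
    have "finsum L (\<lambda>s. phi ((\<lambda>i\<in>S. r \<odot>\<^bsub>Rmod R\<^esub> v i) s) \<otimes>\<^bsub>L\<^esub> s) S
        = finsum L (\<lambda>s. phi r \<otimes>\<^bsub>L\<^esub> (phi (v s) \<otimes>\<^bsub>L\<^esub> s)) S"
      apply (rule L.finsum_cong')
      using r v S(2) pc ring_hom_mult[OF ph] by (auto simp: L.m_assoc subset_iff PiE_def Pi_def)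
    also have "\<dots> = phi r \<otimes>\<^bsub>L\<^esub> finsum L (\<lambda>s. phi (v s) \<otimes>\<^bsub>L\<^esub> s) S"
      apply (rule L.finsum_rdistr[symmetric])
      using r v S pc by (auto simp: subset_iff PiE_def Pi_def)
    finally show "finsum L (\<lambda>s. phi ((\<lambda>i\<in>S. r \<odot>\<^bsub>Rmod R\<^esub> v i) s) \<otimes>\<^bsub>L\<^esub> s) S =
       r \<odot>\<^bsub>toR phi (Lmod L)\<^esub> finsum L (\<lambda>s. phi (v s) \<otimes>\<^bsub>L\<^esub> s) S" by simp
  next
    fix x assume "x \<in> carrier (toR phi (Lmod L))"
    then obtain c where c: "c \<in> S \<rightarrow> carrier R" "x = finsum L (\<lambda>s. phi (c s) \<otimes>\<^bsub>L\<^esub> s) S" using S(3) by auto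
    show "\<exists>v\<in>S \<rightarrow>\<^sub>E carrier (Rmod R). finsum L (\<lambda>s. phi (v s) \<otimes>\<^bsub>L\<^esub> s) S = x"
    proof (intro bexI)
      show "restrict c S \<in> S \<rightarrow>\<^sub>E carrier (Rmod R)" using c by auto
      show "finsum L (\<lambda>s. phi (restrict c S s) \<otimes>\<^bsub>L\<^esub> s) S = x" unfolding c(2)
        apply (rule L.finsum_cong') using c S(2) pc by (auto simp: subset_iff Pi_def)
    qed
  qed
  have fI: "finite I" and gI: "gen \<in> I \<rightarrow> carrier M" and gsp: "\<forall>x\<in>carrier M. \<exists>c\<in>I \<rightarrow> carrier L. x = finsum M (\<lambda>i. c i \<odot>\<^bsub>M\<^esub> gen i) I"
    using fg unfolding fgL_def by auto
  have f2: "fdcc R (toR phi (Lmod L)) I" by (rule G_lemma[OF toR_module[OF LL cr ph] d2 fI])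
  show ?thesis
  proof (rule PL_lemma[OF toR_module[OF LL cr ph] toR_module[OF lm cr ph] f2, where T="\<lambda>v. finsum M (\<lambda>i. v i \<odot>\<^bsub>M\<^esub> gen i) I"])
    fix v assume v: "v \<in> I \<rightarrow>\<^sub>E carrier (toR phi (Lmod L))"
    show "finsum M (\<lambda>i. v i \<odot>\<^bsub>M\<^esub> gen i) I \<in> carrier (toR phi M)"
      using v gI by (auto intro!: M.finsum_closed simp: Pi_def PiE_def)
  next
    fix v w assume v: "v \<in> I \<rightarrow>\<^sub>E carrier (toR phi (Lmod L))" and w: "w \<in> I \<rightarrow>\<^sub>E carrier (toR phi (Lmod L))"
    have "finsum M (\<lambda>i. (\<lambda>i\<in>I. v i \<oplus>\<^bsub>toR phi (Lmod L)\<^esub> w i) i \<odot>\<^bsub>M\<^esub> gen i) I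
        = finsum M (\<lambda>i. v i \<odot>\<^bsub>M\<^esub> gen i \<oplus>\<^bsub>M\<^esub> w i \<odot>\<^bsub>M\<^esub> gen i) I"
      apply (rule M.finsum_cong')
      using v w gI by (auto simp: M.sm_ldistr PiE_def Pi_def)
    also have "\<dots> = finsum M (\<lambda>i. v i \<odot>\<^bsub>M\<^esub> gen i) I \<oplus>\<^bsub>M\<^esub> finsum M (\<lambda>i. w i \<odot>\<^bsub>M\<^esub> gen i) I"
      apply (rule M.finsum_addf) using v w gI by (auto simp: PiE_def Pi_def)
    finally show "finsum M (\<lambda>i. (\<lambda>i\<in>I. v i \<oplus>\<^bsub>toR phi (Lmod L)\<^esub> w i) i \<odot>\<^bsub>M\<^esub> gen i) I =
       finsum M (\<lambda>i. v i \<odot>\<^bsub>M\<^esub> gen i) I \<oplus>\<^bsub>toR phi M\<^esub> finsum M (\<lambda>i. w i \<odot>\<^bsub>M\<^esub> gen i) I" by simp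
  next
    fix r v assume r: "r \<in> carrier R" and v: "v \<in> I \<rightarrow>\<^sub>E carrier (toR phi (Lmod L))"
    have "finsum M (\<lambda>i. (\<lambda>i\<in>I. r \<odot>\<^bsub>toR phi (Lmod L)\<^esub> v i) i \<odot>\<^bsub>M\<^esub> gen i) I
        = finsum M (\<lambda>i. phi r \<odot>\<^bsub>M\<^esub> (v i \<odot>\<^bsub>M\<^esub> gen i)) I"
      apply (rule M.finsum_cong')
      using r v gI pc by (auto simp: M.sm_assoc PiE_def Pi_def)
    also have "\<dots> = phi r \<odot>\<^bsub>M\<^esub> finsum M (\<lambda>i. v i \<odot>\<^bsub>M\<^esub> gen i) I"
      apply (rule M.sm_finsum[symmetric]) using r v gI pc fI by (auto simp: PiE_def Pi_def)
    finally show "finsum M (\<lambda>i. (\<lambda>i\<in>I. r \<odot>\<^bsub>toR phi (Lmod L)\<^esub> v i) i \<odot>\<^bsub>M\<^esub> gen i) I =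
       r \<odot>\<^bsub>toR phi M\<^esub> finsum M (\<lambda>i. v i \<odot>\<^bsub>M\<^esub> gen i) I" by simp
  next
    fix x assume "x \<in> carrier (toR phi M)"
    then obtain c where c: "c \<in> I \<rightarrow> carrier L" "x = finsum M (\<lambda>i. c i \<odot>\<^bsub>M\<^esub> gen i) I" using gsp by auto
    show "\<exists>v\<in>I \<rightarrow>\<^sub>E carrier (toR phi (Lmod L)). finsum M (\<lambda>i. v i \<odot>\<^bsub>M\<^esub> gen i) I = x"
    proof (intro bexI)
      show "restrict c I \<in> I \<rightarrow>\<^sub>E carrier (toR phi (Lmod L))" using c by auto
      show "finsum M (\<lambda>i. restrict c I i \<odot>\<^bsub>M\<^esub> gen i) I = x" unfolding c(2)
        apply (rule M.finsum_cong') using c gI by (auto simp: Pi_def)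
    qed
  qed
qed



definition linU :: "'r ring \<Rightarrow> ('r,'m) module \<Rightarrow> 'm set \<Rightarrow> ('m \<Rightarrow> 'm) \<Rightarrow> bool" where
  "linU L M U k \<longleftrightarrow> k \<in> U \<rightarrow> U \<and> (\<forall>x\<in>U. \<forall>y\<in>U. k (x \<oplus>\<^bsub>M\<^esub> y) = k x \<oplus>\<^bsub>M\<^esub> k y)
     \<and> (\<forall>a\<in>carrier L. \<forall>x\<in>U. k (a \<odot>\<^bsub>M\<^esub> x) = a \<odot>\<^bsub>M\<^esub> k x)"

context lmod begin

lemma submod_sub: "submod L M U \<Longrightarrow> x \<in> U \<Longrightarrow> x \<in> carrier M" unfolding submod_def by auto
lemma submod_zero: "submod L M U \<Longrightarrow> \<zero> \<in> U" unfolding submod_def by auto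
lemma submod_add: "submod L M U \<Longrightarrow> x \<in> U \<Longrightarrow> y \<in> U \<Longrightarrow> x \<oplus> y \<in> U" unfolding submod_def by auto
lemma submod_sm: "submod L M U \<Longrightarrow> a \<in> carrier L \<Longrightarrow> x \<in> U \<Longrightarrow> a \<odot> x \<in> U" unfolding submod_def by auto
lemma submod_neg: "submod L M U \<Longrightarrow> x \<in> U \<Longrightarrow> \<ominus> x \<in> U"
  using submod_sm[of U "\<ominus>\<^bsub>L\<^esub> \<one>\<^bsub>L\<^esub>" x] sm_neg[of "\<one>\<^bsub>L\<^esub>" x] submod_sub by auto
lemma submod_minus: "submod L M U \<Longrightarrow> x \<in> U \<Longrightarrow> y \<in> U \<Longrightarrow> x \<ominus> y \<in> U"
  unfolding a_minus_def using submod_add submod_neg by auto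
lemma submod_finsum: assumes "submod L M U" "finite J" "f \<in> J \<rightarrow> U" shows "finsum M f J \<in> U"
  using assms(2,3)
proof (induct J rule: finite_induct)
  case empty then show ?case using submod_zero assms(1) by simp
next
  case (insert j J)
  have "f \<in> J \<rightarrow> carrier M" "f j \<in> carrier M" using insert submod_sub assms(1) by auto
  thus ?case using insert submod_add assms(1) by (simp add: finsum_insert)
qed

lemma carrier_submod: "submod L M (carrier M)" unfolding submod_def by auto

lemma linU_closed: "linU L M U k \<Longrightarrow> x \<in> U \<Longrightarrow> k x \<in> U" unfolding linU_def by auto

lemma linU_zero: assumes "submod L M U" "linU L M U k" shows "k \<zero> = \<zero>"
proof -
  have z: "\<zero> \<in> U" using submod_zero assms by auto
  have "k \<zero> = k \<zero> \<oplus> k \<zero>" using assms(2) z unfolding linU_def by (metis l_zero zero_closed)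
  moreover have "k \<zero> \<in> carrier M" using linU_closed[OF assms(2) z] submod_sub assms by auto
  ultimately show ?thesis by (metis add.r_cancel_one' zero_closed)
qed

lemma linU_finsum: assumes "submod L M U" "linU L M U k" "finite J" "f \<in> J \<rightarrow> U"
  shows "k (finsum M f J) = finsum M (\<lambda>j. k (f j)) J"
  using assms(3,4)
proof (induct J rule: finite_induct)
  case empty then show ?case using linU_zero[OF assms(1,2)] by simp
next
  case (insert j J)
  have fJ: "f \<in> J \<rightarrow> carrier M" "f j \<in> carrier M" using insert submod_sub assms(1) by auto
  have kJ: "(\<lambda>j. k (f j)) \<in> J \<rightarrow> carrier M" "k (f j) \<in> carrier M"
    using insert linU_closed[OF assms(2)] submod_sub[OF assms(1)] by auto
  have "finsum M f J \<in> U" using submod_finsum[OF assms(1) insert(1)] insert by auto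
  thus ?case using insert fJ kJ assms(2) unfolding linU_def by (simp add: finsum_insert)
qed

lemma linU_comp: "linU L M U k \<Longrightarrow> linU L M U h \<Longrightarrow> linU L M U (\<lambda>x. k (h x))"
  unfolding linU_def by (auto simp: Pi_def)

lemma linU_id: "linU L M U (\<lambda>x. x)" unfolding linU_def by auto

lemma linU_funpow: "linU L M U k \<Longrightarrow> linU L M U (k ^^ n)"
proof (induct n)
  case 0 then show ?case using linU_id by (simp add: id_def)
next
  case (Suc n) then show ?case using linU_comp[of U k "k^^n"] by (simp add: comp_def)
qed

lemma linU_agree:
  assumes U: "submod L M U" and k1: "linU L M U k1" and k2: "linU L M U k2" and fI: "finite I"
    and gI: "gen \<in> I \<rightarrow> U" and sp: "\<forall>x\<in>U. \<exists>c\<in>I \<rightarrow> carrier L. x = finsum M (\<lambda>i. c i \<odot> gen i) I"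
    and ag: "\<forall>i\<in>I. k1 (gen i) = k2 (gen i)" and x: "x \<in> U"
  shows "k1 x = k2 x"
proof -
  obtain c where c: "c \<in> I \<rightarrow> carrier L" "x = finsum M (\<lambda>i. c i \<odot> gen i) I" using sp x by auto
  have cg: "(\<lambda>i. c i \<odot> gen i) \<in> I \<rightarrow> U" using c gI submod_sm[OF U] by auto
  have "k1 x = finsum M (\<lambda>i. k1 (c i \<odot> gen i)) I" using linU_finsum[OF U k1 fI cg] c by simp
  also have "\<dots> = finsum M (\<lambda>i. k2 (c i \<odot> gen i)) I"
  proof (rule finsum_cong')
    fix i assume i: "i \<in> I"
    have "c i \<in> carrier L" "gen i \<in> U" using i c gI by auto
    thus "k1 (c i \<odot> gen i) = k2 (c i \<odot> gen i)" using k1 k2 ag i unfolding linU_def by auto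
  next
    show "(\<lambda>i. k2 (c i \<odot> gen i)) \<in> I \<rightarrow> carrier M"
      using cg linU_closed[OF k2] submod_sub[OF U] by auto
  qed simp
  also have "\<dots> = k2 x" using linU_finsum[OF U k2 fI cg] c by simp
  finally show ?thesis .
qed

end

lemma lhom_linU: "lmodule L M \<Longrightarrow> lhom L M M h \<Longrightarrow> linU L M (carrier M) h"
  unfolding lhom_def linU_def by auto

lemma lhom_funpow: "lhom L M M h \<Longrightarrow> lhom L M M (h ^^ n)"
proof (induct n)
  case 0 then show ?case using lhom_id by (simp add: id_def)
next
  case (Suc n) then show ?case using lhom_comp[OF Suc(1)[OF Suc(2)] Suc(2)] by (simp add: comp_def)
qed



context lmod begin

lemma minus_zero_eq: "x \<in> carrier M \<Longrightarrow> y \<in> carrier M \<Longrightarrow> x \<ominus> y = \<zero> \<Longrightarrow> x = y"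
proof -
  assume x: "x \<in> carrier M" and y: "y \<in> carrier M" and e: "x \<ominus> y = \<zero>"
  have "x = (x \<ominus> y) \<oplus> y" using x y by (simp add: minus_eq a_assoc l_neg)
  thus ?thesis using e y by simp
qed

lemma linU_minus: assumes U: "submod L M U" and k: "linU L M U k" and x: "x \<in> U" and y: "y \<in> U"
  shows "k (x \<ominus> y) = k x \<ominus> k y"
proof -
  have xm: "x \<in> carrier M" and ym: "y \<in> carrier M" using U x y submod_sub by auto
  have "x \<ominus> y = x \<oplus> (\<ominus>\<^bsub>L\<^esub> \<one>\<^bsub>L\<^esub>) \<odot> y" using ym by (simp add: minus_eq sm_neg)
  moreover have "(\<ominus>\<^bsub>L\<^esub> \<one>\<^bsub>L\<^esub>) \<odot> y \<in> U" using submod_sm[OF U _ y] by simp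
  ultimately have "k (x \<ominus> y) = k x \<oplus> (\<ominus>\<^bsub>L\<^esub> \<one>\<^bsub>L\<^esub>) \<odot> k y" using k x y unfolding linU_def by simp
  also have "\<dots> = k x \<ominus> k y" using linU_closed[OF k y] submod_sub[OF U] by (simp add: minus_eq sm_neg)
  finally show ?thesis .
qed

lemma surj_inj:
  assumes aa: "artin_algebra R phi L" and d: "dcc R (toR phi M)" and U: "submod L M U"
    and fI: "finite I" and gI: "gen \<in> I \<rightarrow> U"
    and sp: "\<forall>x\<in>U. \<exists>c\<in>I \<rightarrow> carrier L. x = finsum M (\<lambda>i. c i \<odot> gen i) I"
    and ps: "linU L M U \<psi>" and su: "\<psi> ` U = U"
  shows "inj_on \<psi> U"
proof -
  have ph: "phi \<in> ring_hom R L" and cen: "\<forall>r\<in>carrier R. \<forall>x\<in>carrier L. phi r \<otimes>\<^bsub>L\<^esub> x = x \<otimes>\<^bsub>L\<^esub> phi r"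
    using aa unfolding artin_algebra_def by auto
  have pc: "r \<in> carrier R \<Longrightarrow> phi r \<in> carrier L" for r using ring_hom_closed[OF ph] by auto
  have Um: "x \<in> U \<Longrightarrow> x \<in> carrier M" for x using submod_sub[OF U] by auto
  define E where "E = {e. linU L M U e \<and> (\<forall>x\<in>U. e (\<psi> x) = \<psi> (e x))}"
  define N where "N n = {(\<lambda>i\<in>I. (\<psi>^^n) (e (gen i))) | e. e \<in> E}" for n
  have psn: "linU L M U (\<psi>^^n)" for n using linU_funpow[OF ps] .
  have comm: "e \<in> E \<Longrightarrow> x \<in> U \<Longrightarrow> (\<psi>^^n) (e x) = e ((\<psi>^^n) x)" for e x n
  proof (induct n)
    case 0 then show ?case by simp
  next
    case (Suc n)
    have "(\<psi>^^n) x \<in> U" using linU_closed[OF psn Suc(3)] .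
    then show ?case using Suc unfolding E_def by simp
  qed
  have z0: "\<psi> \<zero> = \<zero>" using linU_zero[OF U ps] .
  have zn: "(\<psi>^^n) \<zero> = \<zero>" for n using linU_zero[OF U psn] .
  have Nmem: "e \<in> E \<Longrightarrow> (\<lambda>i\<in>I. (\<psi>^^n) (e (gen i))) \<in> N n" for e n unfolding N_def by auto
  have fs: "fsub R (toR phi M) I (N n)" for n
    unfolding fsub_def
  proof (intro conjI ballI)
    show "N n \<subseteq> I \<rightarrow>\<^sub>E carrier (toR phi M)"
    proof
      fix v assume "v \<in> N n"
      then obtain e where e: "e \<in> E" and v: "v = (\<lambda>i\<in>I. (\<psi>^^n) (e (gen i)))" unfolding N_def by auto
      have "i \<in> I \<Longrightarrow> (\<psi>^^n) (e (gen i)) \<in> carrier M" for i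
        using e gI linU_closed[OF psn] Um unfolding E_def linU_def by (auto simp: Pi_def)
      thus "v \<in> I \<rightarrow>\<^sub>E carrier (toR phi M)" unfolding v by auto
    qed
  next
    have e0: "(\<lambda>x. \<zero>) \<in> E" unfolding E_def linU_def using submod_zero[OF U] z0 by auto
    have "(\<lambda>i\<in>I. \<zero>\<^bsub>toR phi M\<^esub>) = (\<lambda>i\<in>I. (\<psi>^^n) ((\<lambda>x. \<zero>) (gen i)))" using zn by simp
    thus "(\<lambda>i\<in>I. \<zero>\<^bsub>toR phi M\<^esub>) \<in> N n" using Nmem[OF e0] by simp
  next
    fix v w assume "v \<in> N n" "w \<in> N n"
    then obtain e1 e2 where e1: "e1 \<in> E" and e2: "e2 \<in> E" and v: "v = (\<lambda>i\<in>I. (\<psi>^^n) (e1 (gen i)))"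
      and w: "w = (\<lambda>i\<in>I. (\<psi>^^n) (e2 (gen i)))" unfolding N_def by auto
    have l1: "linU L M U e1" and l2: "linU L M U e2" using e1 e2 unfolding E_def by auto
    let ?e = "\<lambda>x. e1 x \<oplus> e2 x"
    have le: "linU L M U ?e" unfolding linU_def
    proof (intro conjI ballI)
      show "?e \<in> U \<rightarrow> U" using linU_closed[OF l1] linU_closed[OF l2] submod_add[OF U] by auto
    next
      fix x y assume x: "x \<in> U" and y: "y \<in> U"
      have "e1 (x \<oplus> y) \<oplus> e2 (x \<oplus> y) = (e1 x \<oplus> e1 y) \<oplus> (e2 x \<oplus> e2 y)"
        using l1 l2 x y unfolding linU_def by simp
      also have "\<dots> = (e1 x \<oplus> e2 x) \<oplus> (e1 y \<oplus> e2 y)"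
        using linU_closed[OF l1 x] linU_closed[OF l1 y] linU_closed[OF l2 x] linU_closed[OF l2 y] Um by (simp add: a_ac)
      finally show "?e (x \<oplus> y) = ?e x \<oplus> ?e y" .
    next
      fix a x assume a: "a \<in> carrier L" and x: "x \<in> U"
      show "?e (a \<odot> x) = a \<odot> ?e x"
        using l1 l2 a x linU_closed[OF l1 x] linU_closed[OF l2 x] Um unfolding linU_def by (simp add: sm_rdistr)
    qed
    have eE: "?e \<in> E" unfolding E_def
    proof (intro CollectI conjI ballI le)
      fix x assume x: "x \<in> U"
      show "?e (\<psi> x) = \<psi> (?e x)" using e1 e2 x ps linU_closed[OF l1 x] linU_closed[OF l2 x]
        unfolding E_def linU_def by simp
    qed
    have "(\<lambda>i\<in>I. v i \<oplus>\<^bsub>toR phi M\<^esub> w i) = (\<lambda>i\<in>I. (\<psi>^^n) (?e (gen i)))"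
      using psn[of n] gI linU_closed[OF l1] linU_closed[OF l2] unfolding v w linU_def by (auto simp: Pi_def)
    thus "(\<lambda>i\<in>I. v i \<oplus>\<^bsub>toR phi M\<^esub> w i) \<in> N n" using Nmem[OF eE] by simp
  next
    fix r v assume r: "r \<in> carrier R" and "v \<in> N n"
    then obtain e1 where e1: "e1 \<in> E" and v: "v = (\<lambda>i\<in>I. (\<psi>^^n) (e1 (gen i)))" unfolding N_def by auto
    have l1: "linU L M U e1" using e1 unfolding E_def by auto
    let ?e = "\<lambda>x. phi r \<odot> e1 x"
    have le: "linU L M U ?e" unfolding linU_def
    proof (intro conjI ballI)
      show "?e \<in> U \<rightarrow> U" using linU_closed[OF l1] submod_sm[OF U pc[OF r]] by auto
    next
      fix x y assume x: "x \<in> U" and y: "y \<in> U"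
      show "?e (x \<oplus> y) = ?e x \<oplus> ?e y"
        using l1 x y linU_closed[OF l1 x] linU_closed[OF l1 y] Um pc[OF r] unfolding linU_def by (simp add: sm_rdistr)
    next
      fix a x assume a: "a \<in> carrier L" and x: "x \<in> U"
      have ex: "e1 x \<in> carrier M" using linU_closed[OF l1 x] Um by auto
      have "?e (a \<odot> x) = phi r \<odot> (a \<odot> e1 x)" using l1 a x unfolding linU_def by simp
      also have "\<dots> = (phi r \<otimes>\<^bsub>L\<^esub> a) \<odot> e1 x" using sm_assoc[OF pc[OF r] a ex] by simp
      also have "\<dots> = (a \<otimes>\<^bsub>L\<^esub> phi r) \<odot> e1 x" using cen r a by simp
      also have "\<dots> = a \<odot> ?e x" using sm_assoc[OF a pc[OF r] ex] by simp
      finally show "?e (a \<odot> x) = a \<odot> ?e x" .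
    qed
    have eE: "?e \<in> E" unfolding E_def
    proof (intro CollectI conjI ballI le)
      fix x assume x: "x \<in> U"
      show "?e (\<psi> x) = \<psi> (?e x)" using e1 x ps linU_closed[OF l1 x] pc[OF r]
        unfolding E_def linU_def by simp
    qed
    have "(\<lambda>i\<in>I. r \<odot>\<^bsub>toR phi M\<^esub> v i) = (\<lambda>i\<in>I. (\<psi>^^n) (?e (gen i)))"
      using psn[of n] gI linU_closed[OF l1] pc[OF r] unfolding v linU_def by (auto simp: Pi_def)
    thus "(\<lambda>i\<in>I. r \<odot>\<^bsub>toR phi M\<^esub> v i) \<in> N n" using Nmem[OF eE] by simp
  qed
  have dec: "N (Suc n) \<subseteq> N n" for n
  proof
    fix v assume "v \<in> N (Suc n)"
    then obtain e where e: "e \<in> E" and v: "v = (\<lambda>i\<in>I. (\<psi>^^Suc n) (e (gen i)))" unfolding N_def by auto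
    have l: "linU L M U e" using e unfolding E_def by auto
    have e': "(\<lambda>x. \<psi> (e x)) \<in> E" unfolding E_def
    proof (intro CollectI conjI ballI)
      show "linU L M U (\<lambda>x. \<psi> (e x))" by (rule linU_comp[OF ps l])
      fix x assume "x \<in> U" thus "\<psi> (e (\<psi> x)) = \<psi> (\<psi> (e x))" using e unfolding E_def by simp
    qed
    have "v = (\<lambda>i\<in>I. (\<psi>^^n) ((\<lambda>x. \<psi> (e x)) (gen i)))" unfolding v by (simp add: funpow_Suc_right del: funpow.simps)
    thus "v \<in> N n" using Nmem[OF e'] by simp
  qed
  have cr: "cring R" using aa unfolding artin_algebra_def artinian_cring_def by auto
  have fd: "fdcc R (toR phi M) I" by (rule G_lemma[OF toR_module[OF lm cr ph] d fI])
  have "\<exists>m. \<forall>n\<ge>m. N n = N m" apply (rule fd[unfolded fdcc_def, rule_format]) using fs dec by blast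
  then obtain m where m: "\<forall>n\<ge>m. N n = N m" by blast
  have idE: "(\<lambda>x. x) \<in> E" unfolding E_def using linU_id by auto
  have "(\<lambda>i\<in>I. (\<psi>^^m) (gen i)) \<in> N m" using Nmem[OF idE, of m] by simp
  moreover have "N (Suc m) = N m" using m[rule_format, of "Suc m"] by simp
  ultimately have "(\<lambda>i\<in>I. (\<psi>^^m) (gen i)) \<in> N (Suc m)" by simp
  then obtain e where e: "e \<in> E" and eq: "(\<lambda>i\<in>I. (\<psi>^^m) (gen i)) = (\<lambda>i\<in>I. (\<psi>^^Suc m) (e (gen i)))"
    unfolding N_def by blast
  have le: "linU L M U e" using e unfolding E_def by auto
  have ag: "\<forall>i\<in>I. (\<lambda>x. (\<psi>^^Suc m) (e x)) (gen i) = (\<psi>^^m) (gen i)"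
  proof
    fix i assume "i \<in> I" thus "(\<lambda>x. (\<psi>^^Suc m) (e x)) (gen i) = (\<psi>^^m) (gen i)"
      using fun_cong[OF eq, of i] by simp
  qed
  have agree: "x \<in> U \<Longrightarrow> (\<psi>^^Suc m) (e x) = (\<psi>^^m) x" for x
    using linU_agree[OF U linU_comp[OF psn le] psn fI gI sp ag] by simp
  have surm: "(\<psi>^^n) ` U = U" for n
  proof (induct n)
    case 0 then show ?case by simp
  next
    case (Suc n) then show ?case using su image_image[of \<psi> "\<psi>^^n" U] by simp
  qed
  have ker: "z \<in> U \<Longrightarrow> \<psi> z = \<zero> \<Longrightarrow> z = \<zero>" for z
  proof -
    assume z: "z \<in> U" and pz: "\<psi> z = \<zero>"
    obtain w where w: "w \<in> U" and zw: "z = (\<psi>^^m) w" using z surm[of m] by auto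
    have "z = (\<psi>^^Suc m) (e w)" using agree[OF w] zw by simp
    also have "\<dots> = e ((\<psi>^^Suc m) w)" using comm[OF e w] .
    also have "\<dots> = e (\<psi> z)" using zw by simp
    also have "\<dots> = \<zero>" using pz linU_zero[OF U le] by simp
    finally show "z = \<zero>" .
  qed
  show ?thesis
  proof (rule inj_onI)
    fix x y assume x: "x \<in> U" and y: "y \<in> U" and e: "\<psi> x = \<psi> y"
    have "\<psi> (x \<ominus> y) = \<psi> x \<ominus> \<psi> y" by (rule linU_minus[OF U ps x y])
    also have "\<dots> = \<zero>" using e linU_closed[OF ps y] Um by (simp add: minus_eq r_neg)
    finally have "x \<ominus> y = \<zero>" using ker submod_minus[OF U x y] by blast
    thus "x = y" using minus_zero_eq x y Um by blast
  qed
qed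


lemma submod_subm: assumes "phi \<in> ring_hom R L" "submod L M U" shows "subm R (toR phi M) U"
proof -
  have "r \<in> carrier R \<Longrightarrow> phi r \<in> carrier L" for r using ring_hom_closed[OF assms(1)] .
  thus ?thesis using assms(2) unfolding submod_def subm_def by auto
qed

lemma image_submod: assumes "lhom L M M k" shows "submod L M (k ` carrier M)"
  unfolding submod_def
proof (intro conjI ballI)
  show "k ` carrier M \<subseteq> carrier M" using lhom_closed[OF assms] by auto
  show "\<zero> \<in> k ` carrier M" using lhom_zero[OF lm lm assms] by (metis image_eqI zero_closed)
  fix x y assume "x \<in> k ` carrier M" "y \<in> k ` carrier M"
  then obtain a b where "a \<in> carrier M" "b \<in> carrier M" "x = k a" "y = k b" by auto
  thus "x \<oplus> y \<in> k ` carrier M" using lhom_add[OF assms] by (metis a_closed image_eqI)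
next
  fix c x assume c: "c \<in> carrier L" and "x \<in> k ` carrier M"
  then obtain a where "a \<in> carrier M" "x = k a" by auto
  thus "c \<odot> x \<in> k ` carrier M" using lhom_smult[OF assms c] c by (metis sm_closed image_eqI)
qed

lemma kernel_submod: assumes "lhom L M M k" shows "submod L M {x \<in> carrier M. k x = \<zero>}"
  unfolding submod_def using lhom_zero[OF lm lm assms] lhom_add[OF assms] lhom_smult[OF assms] by auto

lemma fitting:
  assumes aa: "artin_algebra R phi L" and fg: "fgL L M I gen" and ind: "indecomposable L M"
    and h: "lhom L M M \<phi>"
  shows "bij_betw \<phi> (carrier M) (carrier M) \<or> (\<exists>n. \<forall>x\<in>carrier M. (\<phi>^^n) x = \<zero>)"
proof -
  have ph: "phi \<in> ring_hom R L" using aa unfolding artin_algebra_def by auto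
  have d: "dcc R (toR phi M)" by (rule dcc_L[OF aa lm fg])
  have fI: "finite I" and gI: "gen \<in> I \<rightarrow> carrier M" and sp: "\<forall>x\<in>carrier M. \<exists>c\<in>I \<rightarrow> carrier L. x = finsum M (\<lambda>i. c i \<odot> gen i) I"
    using fg unfolding fgL_def by auto
  define Im where "Im n = (\<phi>^^n) ` carrier M" for n
  have hn: "lhom L M M (\<phi>^^n)" for n by (rule lhom_funpow[OF h])
  have smI: "submod L M (Im n)" for n unfolding Im_def by (rule image_submod[OF hn])
  have decI: "Im (Suc n) \<subseteq> Im n" for n
    unfolding Im_def using lhom_closed[OF h] by (auto simp: funpow_Suc_right simp del: funpow.simps)
  have "\<exists>m. \<forall>k\<ge>m. Im k = Im m" apply (rule d[unfolded dcc_def, rule_format])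
    using submod_subm[OF ph smI] decI by blast
  then obtain n where n: "\<forall>k\<ge>n. Im k = Im n" by blast
  define U where "U = Im n"
  define K where "K = {x \<in> carrier M. (\<phi>^^n) x = \<zero>}"
  have sU: "submod L M U" unfolding U_def by (rule smI)
  have sK: "submod L M K" unfolding K_def by (rule kernel_submod[OF hn])
  have Um: "x \<in> U \<Longrightarrow> x \<in> carrier M" for x using sU submod_sub by auto
  have phU: "\<phi> ` U = U"
  proof -
    have "\<phi> ` U = Im (Suc n)" unfolding U_def Im_def by (simp add: image_image)
    moreover have "Im (Suc n) = Im n" using n[rule_format, of "Suc n"] by simp
    ultimately show ?thesis unfolding U_def by simp
  qed
  have lU: "linU L M U \<phi>" unfolding linU_def using phU Um lhom_add[OF h] lhom_smult[OF h] by auto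
  have gU: "(\<lambda>i. (\<phi>^^n) (gen i)) \<in> I \<rightarrow> U" using gI unfolding U_def Im_def by auto
  have spU: "\<forall>x\<in>U. \<exists>c\<in>I \<rightarrow> carrier L. x = finsum M (\<lambda>i. c i \<odot> (\<phi>^^n) (gen i)) I"
  proof
    fix x assume "x \<in> U"
    then obtain y where y: "y \<in> carrier M" and xy: "x = (\<phi>^^n) y" unfolding U_def Im_def by auto
    obtain c where c: "c \<in> I \<rightarrow> carrier L" and yc: "y = finsum M (\<lambda>i. c i \<odot> gen i) I" using sp y by auto
    have "x = finsum M (\<lambda>i. (\<phi>^^n) (c i \<odot> gen i)) I"
      unfolding xy yc by (rule lhom_finsum[OF lm lm hn fI]) (use c gI in auto)
    also have "\<dots> = finsum M (\<lambda>i. c i \<odot> (\<phi>^^n) (gen i)) I"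
    proof (rule finsum_cong')
      fix i assume i: "i \<in> I"
      have "c i \<in> carrier L" "gen i \<in> carrier M" using i c gI by auto
      thus "(\<phi>^^n) (c i \<odot> gen i) = c i \<odot> (\<phi>^^n) (gen i)" using lhom_smult[OF hn] by blast
    next
      show "(\<lambda>i. c i \<odot> (\<phi>^^n) (gen i)) \<in> I \<rightarrow> carrier M" using c gI lhom_closed[OF hn] by (auto simp: Pi_def)
    qed simp
    finally show "\<exists>c\<in>I \<rightarrow> carrier L. x = finsum M (\<lambda>i. c i \<odot> (\<phi>^^n) (gen i)) I" using c by blast
  qed
  have injU: "inj_on \<phi> U" by (rule surj_inj[OF aa d sU fI gU spU lU phU])
  have injn: "inj_on (\<phi>^^k) U" for k
  proof (induct k)
    case 0 then show ?case by simp
  next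
    case (Suc k)
    have "(\<phi>^^k) ` U \<subseteq> U" using linU_closed[OF linU_funpow[OF lU]] by auto
    hence "inj_on \<phi> ((\<phi>^^k) ` U)" using injU inj_on_subset by blast
    thus ?case using Suc comp_inj_on[of "\<phi>^^k" U \<phi>] by (simp add: comp_def)
  qed
  have int: "U \<inter> K = {\<zero>}"
  proof
    show "{\<zero>} \<subseteq> U \<inter> K" using submod_zero sU sK by auto
    show "U \<inter> K \<subseteq> {\<zero>}"
    proof
      fix x assume x: "x \<in> U \<inter> K"
      have "(\<phi>^^n) x = (\<phi>^^n) \<zero>" using x lhom_zero[OF lm lm hn] unfolding K_def by auto
      thus "x \<in> {\<zero>}" using injn[of n] x submod_zero[OF sU] unfolding inj_on_def by blast
    qed
  qed
  have sum: "{x \<oplus> y | x y. x \<in> U \<and> y \<in> K} = carrier M"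
  proof
    show "{x \<oplus> y | x y. x \<in> U \<and> y \<in> K} \<subseteq> carrier M" using Um sK submod_sub by auto
    show "carrier M \<subseteq> {x \<oplus> y | x y. x \<in> U \<and> y \<in> K}"
    proof
      fix x assume x: "x \<in> carrier M"
      have "Im (n + n) = Im n" using n[rule_format, of "n+n"] by simp
      hence "(\<phi>^^n) x \<in> Im (n + n)" using x unfolding Im_def by auto
      then obtain y where y: "y \<in> carrier M" and e: "(\<phi>^^n) x = (\<phi>^^n) ((\<phi>^^n) y)"
        unfolding Im_def by (auto simp: funpow_add)
      define u where "u = (\<phi>^^n) y"
      have uU: "u \<in> U" unfolding u_def U_def Im_def using y by auto
      have um: "u \<in> carrier M" using Um[OF uU] .
      have "(\<phi>^^n) (x \<ominus> u) = (\<phi>^^n) x \<ominus> (\<phi>^^n) u" by (rule lhom_minus[OF lm lm hn x um])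
      also have "\<dots> = \<zero>" using e lhom_closed[OF hn um] unfolding u_def by (simp add: minus_eq r_neg)
      finally have kK: "x \<ominus> u \<in> K" unfolding K_def using x um by auto
      have "u \<oplus> (x \<ominus> u) = x \<oplus> (u \<oplus> \<ominus> u)" using x um by (simp add: minus_eq a_lcomm)
      hence "x = u \<oplus> (x \<ominus> u)" using x um by (simp add: r_neg)
      thus "x \<in> {x \<oplus> y | x y. x \<in> U \<and> y \<in> K}" using uU kK by blast
    qed
  qed
  have "U = {\<zero>} \<or> K = {\<zero>}" using ind sU sK int sum unfolding indecomposable_def by blast
  thus ?thesis
  proof
    assume "U = {\<zero>}"
    hence "\<forall>x\<in>carrier M. (\<phi>^^n) x = \<zero>" unfolding U_def Im_def by auto
    thus ?thesis by blast
  next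
    assume K0: "K = {\<zero>}"
    have "U = carrier M"
    proof
      show "U \<subseteq> carrier M" using Um by auto
      show "carrier M \<subseteq> U"
      proof
        fix x assume "x \<in> carrier M"
        then obtain u k where "u \<in> U" "k \<in> K" "x = u \<oplus> k" using sum by blast
        thus "x \<in> U" using K0 Um by auto
      qed
    qed
    thus ?thesis using injU phU unfolding bij_betw_def by simp
  qed
qed

end


definition trans_mod :: "('r,'x) module \<Rightarrow> ('x \<Rightarrow> 'y) \<Rightarrow> ('r,'y) module" where
  "trans_mod Q \<iota> = \<lparr>carrier = \<iota> ` carrier Q, monoid.mult = (\<lambda>a b. a), one = \<iota> \<zero>\<^bsub>Q\<^esub>,
     ring.zero = \<iota> \<zero>\<^bsub>Q\<^esub>,
     ring.add = (\<lambda>a b. \<iota> (the_inv_into (carrier Q) \<iota> a \<oplus>\<^bsub>Q\<^esub> the_inv_into (carrier Q) \<iota> b)),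
     smult = (\<lambda>r a. \<iota> (r \<odot>\<^bsub>Q\<^esub> the_inv_into (carrier Q) \<iota> a))\<rparr>"

lemma trans_simps: "carrier (trans_mod Q \<iota>) = \<iota> ` carrier Q"
  "a \<oplus>\<^bsub>trans_mod Q \<iota>\<^esub> b = \<iota> (the_inv_into (carrier Q) \<iota> a \<oplus>\<^bsub>Q\<^esub> the_inv_into (carrier Q) \<iota> b)"
  "\<zero>\<^bsub>trans_mod Q \<iota>\<^esub> = \<iota> \<zero>\<^bsub>Q\<^esub>"
  "r \<odot>\<^bsub>trans_mod Q \<iota>\<^esub> a = \<iota> (r \<odot>\<^bsub>Q\<^esub> the_inv_into (carrier Q) \<iota> a)"
  by (simp_all add: trans_mod_def)

lemma transport:
  assumes lm: "lmodule L Q" and inj: "inj_on \<iota> (carrier Q)"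
  shows "lmodule L (trans_mod Q \<iota>)" "lhom L Q (trans_mod Q \<iota>) \<iota>"
    "bij_betw \<iota> (carrier Q) (carrier (trans_mod Q \<iota>))"
proof -
  interpret Q: lmod L Q by (unfold_locales, rule lm)
  let ?i = "the_inv_into (carrier Q) \<iota>"
  have ii: "x \<in> carrier Q \<Longrightarrow> ?i (\<iota> x) = x" for x using the_inv_into_f_f[OF inj] by auto
  note simps = trans_simps ii
  have pre: "x \<in> carrier (trans_mod Q \<iota>) \<Longrightarrow> \<exists>a\<in>carrier Q. x = \<iota> a" for x by (auto simp: trans_simps)
  have ag: "abelian_group (trans_mod Q \<iota>)"
  proof (rule abelian_groupI)
    fix x y assume x: "x \<in> carrier (trans_mod Q \<iota>)" and y: "y \<in> carrier (trans_mod Q \<iota>)"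
    obtain a where "a \<in> carrier Q" "x = \<iota> a" using pre[OF x] by blast
    moreover obtain b where "b \<in> carrier Q" "y = \<iota> b" using pre[OF y] by blast
    ultimately show "x \<oplus>\<^bsub>trans_mod Q \<iota>\<^esub> y \<in> carrier (trans_mod Q \<iota>)" by (simp add: simps)
  next
    show "\<zero>\<^bsub>trans_mod Q \<iota>\<^esub> \<in> carrier (trans_mod Q \<iota>)" by (simp add: trans_simps)
  next
    fix x y z assume x: "x \<in> carrier (trans_mod Q \<iota>)" and y: "y \<in> carrier (trans_mod Q \<iota>)" and z: "z \<in> carrier (trans_mod Q \<iota>)"
    obtain a where "a \<in> carrier Q" "x = \<iota> a" using pre[OF x] by blast
    moreover obtain b where "b \<in> carrier Q" "y = \<iota> b" using pre[OF y] by blast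
    moreover obtain c where "c \<in> carrier Q" "z = \<iota> c" using pre[OF z] by blast
    ultimately show "x \<oplus>\<^bsub>trans_mod Q \<iota>\<^esub> y \<oplus>\<^bsub>trans_mod Q \<iota>\<^esub> z = x \<oplus>\<^bsub>trans_mod Q \<iota>\<^esub> (y \<oplus>\<^bsub>trans_mod Q \<iota>\<^esub> z)"
      by (simp add: simps Q.a_ac)
  next
    fix x y assume x: "x \<in> carrier (trans_mod Q \<iota>)" and y: "y \<in> carrier (trans_mod Q \<iota>)"
    obtain a where "a \<in> carrier Q" "x = \<iota> a" using pre[OF x] by blast
    moreover obtain b where "b \<in> carrier Q" "y = \<iota> b" using pre[OF y] by blast
    ultimately show "x \<oplus>\<^bsub>trans_mod Q \<iota>\<^esub> y = y \<oplus>\<^bsub>trans_mod Q \<iota>\<^esub> x" by (simp add: simps Q.a_ac)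
  next
    fix x assume x: "x \<in> carrier (trans_mod Q \<iota>)"
    obtain a where a: "a \<in> carrier Q" "x = \<iota> a" using pre[OF x] by blast
    thus "\<zero>\<^bsub>trans_mod Q \<iota>\<^esub> \<oplus>\<^bsub>trans_mod Q \<iota>\<^esub> x = x" by (simp add: simps)
    have "\<iota> (\<ominus>\<^bsub>Q\<^esub> a) \<in> carrier (trans_mod Q \<iota>)" using a by (simp add: trans_simps)
    moreover have "\<iota> (\<ominus>\<^bsub>Q\<^esub> a) \<oplus>\<^bsub>trans_mod Q \<iota>\<^esub> x = \<zero>\<^bsub>trans_mod Q \<iota>\<^esub>"
      using a by (simp add: simps Q.l_neg)
    ultimately show "\<exists>y\<in>carrier (trans_mod Q \<iota>). y \<oplus>\<^bsub>trans_mod Q \<iota>\<^esub> x = \<zero>\<^bsub>trans_mod Q \<iota>\<^esub>" by blast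
  qed
  show "lmodule L (trans_mod Q \<iota>)" unfolding lmodule_def
  proof (intro conjI ballI ag Q.ringL)
    fix a b x y assume a: "a \<in> carrier L" and b: "b \<in> carrier L" and x: "x \<in> carrier (trans_mod Q \<iota>)"
      and y: "y \<in> carrier (trans_mod Q \<iota>)"
    obtain u where u: "u \<in> carrier Q" "x = \<iota> u" using pre[OF x] by blast
    obtain v where v: "v \<in> carrier Q" "y = \<iota> v" using pre[OF y] by blast
    show "a \<odot>\<^bsub>trans_mod Q \<iota>\<^esub> x \<in> carrier (trans_mod Q \<iota>)" using a u by (simp add: simps)
    show "(a \<oplus>\<^bsub>L\<^esub> b) \<odot>\<^bsub>trans_mod Q \<iota>\<^esub> x = a \<odot>\<^bsub>trans_mod Q \<iota>\<^esub> x \<oplus>\<^bsub>trans_mod Q \<iota>\<^esub> b \<odot>\<^bsub>trans_mod Q \<iota>\<^esub> x"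
      using a b u by (simp add: simps Q.sm_ldistr)
    show "a \<odot>\<^bsub>trans_mod Q \<iota>\<^esub> (x \<oplus>\<^bsub>trans_mod Q \<iota>\<^esub> y) = a \<odot>\<^bsub>trans_mod Q \<iota>\<^esub> x \<oplus>\<^bsub>trans_mod Q \<iota>\<^esub> a \<odot>\<^bsub>trans_mod Q \<iota>\<^esub> y"
      using a u v by (simp add: simps Q.sm_rdistr)
    show "(a \<otimes>\<^bsub>L\<^esub> b) \<odot>\<^bsub>trans_mod Q \<iota>\<^esub> x = a \<odot>\<^bsub>trans_mod Q \<iota>\<^esub> (b \<odot>\<^bsub>trans_mod Q \<iota>\<^esub> x)"
      using a b u by (simp add: simps Q.sm_assoc)
  next
    fix x assume x: "x \<in> carrier (trans_mod Q \<iota>)"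
    obtain u where u: "u \<in> carrier Q" "x = \<iota> u" using pre[OF x] by blast
    show "\<one>\<^bsub>L\<^esub> \<odot>\<^bsub>trans_mod Q \<iota>\<^esub> x = x" using u by (simp add: simps)
  qed
  show "lhom L Q (trans_mod Q \<iota>) \<iota>" unfolding lhom_def by (auto simp: simps)
  show "bij_betw \<iota> (carrier Q) (carrier (trans_mod Q \<iota>))" using inj by (simp add: bij_betw_def trans_simps)
qed

lemma transport_fg:
  assumes fg: "fg_lmodule L Q" and inj: "inj_on \<iota> (carrier Q)"
  shows "fg_lmodule L (trans_mod Q \<iota>)"
proof -
  have lm: "lmodule L Q" using fg unfolding fg_lmodule_def by auto
  interpret Q: lmod L Q by (unfold_locales, rule lm)
  note T = transport[OF lm inj]
  interpret Y: lmod L "trans_mod Q \<iota>" by (unfold_locales, rule T(1))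
  let ?i = "the_inv_into (carrier Q) \<iota>"
  have ii: "x \<in> carrier Q \<Longrightarrow> ?i (\<iota> x) = x" for x using the_inv_into_f_f[OF inj] by auto
  obtain S where S: "finite S" "S \<subseteq> carrier Q"
    "\<forall>x\<in>carrier Q. \<exists>c. c \<in> S \<rightarrow> carrier L \<and> x = finsum Q (\<lambda>s. c s \<odot>\<^bsub>Q\<^esub> s) S"
    using fg unfolding fg_lmodule_def by blast
  show ?thesis unfolding fg_lmodule_def
  proof (intro conjI exI[of _ "\<iota> ` S"] T(1) ballI)
    show "finite (\<iota> ` S)" using S by auto
    show "\<iota> ` S \<subseteq> carrier (trans_mod Q \<iota>)" using S by (auto simp: trans_simps)
    fix y assume "y \<in> carrier (trans_mod Q \<iota>)"
    then obtain x where x: "x \<in> carrier Q" "y = \<iota> x" by (auto simp: trans_simps)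
    obtain c where c: "c \<in> S \<rightarrow> carrier L" "x = finsum Q (\<lambda>s. c s \<odot>\<^bsub>Q\<^esub> s) S" using S x by blast
    let ?c = "\<lambda>t. c (?i t)"
    have "finsum (trans_mod Q \<iota>) (\<lambda>t. ?c t \<odot>\<^bsub>trans_mod Q \<iota>\<^esub> t) (\<iota> ` S)
        = finsum (trans_mod Q \<iota>) (\<lambda>s. ?c (\<iota> s) \<odot>\<^bsub>trans_mod Q \<iota>\<^esub> \<iota> s) S"
      apply (rule Y.finsum_reindex)
      using c S inj_on_subset[OF inj S(2)] by (auto simp: trans_simps ii Pi_def subset_iff)
    also have "\<dots> = finsum (trans_mod Q \<iota>) (\<lambda>s. \<iota> (c s \<odot>\<^bsub>Q\<^esub> s)) S"
      apply (rule Y.finsum_cong') using c S by (auto simp: trans_simps ii Pi_def subset_iff)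
    also have "\<dots> = \<iota> x" unfolding c(2)
      by (rule lhom_finsum[OF lm T(1) T(2) S(1), symmetric]) (use c S in auto)
    finally have "y = finsum (trans_mod Q \<iota>) (\<lambda>t. ?c t \<odot>\<^bsub>trans_mod Q \<iota>\<^esub> t) (\<iota> ` S)" using x by simp
    moreover have "?c \<in> \<iota> ` S \<rightarrow> carrier L" using c S by (auto simp: ii subset_iff)
    ultimately show "\<exists>c. c \<in> \<iota> ` S \<rightarrow> carrier L \<and> y = finsum (trans_mod Q \<iota>) (\<lambda>s. c s \<odot>\<^bsub>trans_mod Q \<iota>\<^esub> s) (\<iota> ` S)"
      by blast
  qed
qed



lemma canon_inj:
  fixes L :: "'r ring" and Q :: "('r,'q) module"
  assumes fg: "fg_lmodule L Q"
  shows "\<exists>\<iota> :: 'q \<Rightarrow> (nat \<Rightarrow> 'r) set. inj_on \<iota> (carrier Q)"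
proof -
  have lm: "lmodule L Q" using fg unfolding fg_lmodule_def by auto
  interpret Q: lmod L Q by (unfold_locales, rule lm)
  obtain S where S: "finite S" "S \<subseteq> carrier Q"
    "\<forall>x\<in>carrier Q. \<exists>c. c \<in> S \<rightarrow> carrier L \<and> x = finsum Q (\<lambda>s. c s \<odot>\<^bsub>Q\<^esub> s) S"
    using fg unfolding fg_lmodule_def by blast
  obtain f :: "'q \<Rightarrow> nat" and n where f: "f ` S = {i. i < n}" "inj_on f S"
    using finite_imp_inj_to_nat_seg[OF S(1)] by blast
  define \<iota> :: "'q \<Rightarrow> (nat \<Rightarrow> 'r) set" where
    "\<iota> x = {v. (\<forall>s\<in>S. v (f s) \<in> carrier L) \<and> x = finsum Q (\<lambda>s. v (f s) \<odot>\<^bsub>Q\<^esub> s) S}" for x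
  have mem: "x \<in> carrier Q \<Longrightarrow> \<exists>v. v \<in> \<iota> x" for x
  proof -
    assume "x \<in> carrier Q"
    then obtain c where c: "c \<in> S \<rightarrow> carrier L" "x = finsum Q (\<lambda>s. c s \<odot>\<^bsub>Q\<^esub> s) S" using S(3) by blast
    define v where "v k = c (inv_into S f k)" for k
    have vf: "s \<in> S \<Longrightarrow> v (f s) = c s" for s unfolding v_def using inv_into_f_f[OF f(2)] by simp
    have "x = finsum Q (\<lambda>s. v (f s) \<odot>\<^bsub>Q\<^esub> s) S" unfolding c(2)
      apply (rule Q.finsum_cong') using c S(2) vf by (auto simp: Pi_def subset_iff)
    moreover have "\<forall>s\<in>S. v (f s) \<in> carrier L" using vf c by auto
    ultimately show ?thesis unfolding \<iota>_def by blast
  qed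
  have "inj_on \<iota> (carrier Q)"
  proof (rule inj_onI)
    fix x y assume x: "x \<in> carrier Q" and y: "y \<in> carrier Q" and e: "\<iota> x = \<iota> y"
    obtain v where v: "v \<in> \<iota> x" using mem[OF x] by blast
    hence "v \<in> \<iota> y" using e by simp
    thus "x = y" using v unfolding \<iota>_def by simp
  qed
  thus ?thesis by blast
qed

lemma inj_ext:
  fixes L :: "'r ring" and B :: "('r,'b) module" and M :: "('r,'m) module" and N :: "('r,'n) module"
  assumes inj: "inj_mod L B" and fM: "fg_lmodule L M" and fN: "fg_lmodule L N"
    and h: "lhom L M N h" and hi: "inj_on h (carrier M)" and p: "lhom L M B p"
  shows "\<exists>q. lhom L N B q \<and> (\<forall>x\<in>carrier M. q (h x) = p x)"
proof -
  obtain \<iota>M :: "_ \<Rightarrow> (nat \<Rightarrow> 'r) set" where iM: "inj_on \<iota>M (carrier M)" using canon_inj[OF fM] by blast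
  obtain \<iota>N :: "_ \<Rightarrow> (nat \<Rightarrow> 'r) set" where iN: "inj_on \<iota>N (carrier N)" using canon_inj[OF fN] by blast
  have lM: "lmodule L M" using fM unfolding fg_lmodule_def by auto
  have lN: "lmodule L N" using fN unfolding fg_lmodule_def by auto
  note TM = transport[OF lM iM] and TN = transport[OF lN iN]
  let ?M = "trans_mod M \<iota>M" and ?N = "trans_mod N \<iota>N"
  let ?jM = "the_inv_into (carrier M) \<iota>M"
  have jM: "lhom L ?M M ?jM" by (rule lhom_inv[OF lM TM(1) TM(2) TM(3)])
  have jMi: "x \<in> carrier M \<Longrightarrow> ?jM (\<iota>M x) = x" for x using the_inv_into_f_f[OF iM] by auto
  define h' where "h' y = \<iota>N (h (?jM y))" for y
  define p' where "p' y = p (?jM y)" for y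
  have lh': "lhom L ?M ?N h'" unfolding h'_def by (rule lhom_comp[OF lhom_comp[OF jM h] TN(2)])
  have lp': "lhom L ?M B p'" unfolding p'_def by (rule lhom_comp[OF jM p])
  have ih': "inj_on h' (carrier ?M)"
  proof (rule inj_onI)
    fix y1 y2 assume y1: "y1 \<in> carrier ?M" and y2: "y2 \<in> carrier ?M" and e: "h' y1 = h' y2"
    obtain a where a: "a \<in> carrier M" "y1 = \<iota>M a" using y1 by (auto simp: trans_simps)
    obtain b where b: "b \<in> carrier M" "y2 = \<iota>M b" using y2 by (auto simp: trans_simps)
    have "\<iota>N (h a) = \<iota>N (h b)" using e a b unfolding h'_def by (simp add: jMi)
    hence "h a = h b" using iN lhom_closed[OF h] a b unfolding inj_on_def by blast
    hence "a = b" using hi a b unfolding inj_on_def by blast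
    thus "y1 = y2" using a b by simp
  qed
  have fM': "fg_lmodule L ?M" by (rule transport_fg[OF fM iM])
  have fN': "fg_lmodule L ?N" by (rule transport_fg[OF fN iN])
  obtain q' where q': "lhom L ?N B q'" and qe: "\<forall>y\<in>carrier ?M. q' (h' y) = p' y"
    using inj[unfolded inj_mod_def, THEN conjunct2, rule_format, of ?M ?N h' p'] fM' fN' lh' ih' lp' by auto
  show ?thesis
  proof (intro exI conjI ballI)
    show "lhom L N B (\<lambda>x. q' (\<iota>N x))" by (rule lhom_comp[OF TN(2) q'])
    fix x assume x: "x \<in> carrier M"
    have "\<iota>M x \<in> carrier ?M" using x by (simp add: trans_simps)
    hence "q' (h' (\<iota>M x)) = p' (\<iota>M x)" using qe by blast
    thus "q' (\<iota>N (h x)) = p x" unfolding h'_def p'_def using jMi[OF x] by simp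
  qed
qed

lemma proj_ext:
  fixes L :: "'r ring" and P :: "('r,'p) module" and M :: "('r,'m) module" and N :: "('r,'n) module"
  assumes pr: "proj_mod L P" and fM: "fg_lmodule L M" and fN: "fg_lmodule L N"
    and h: "lhom L M N h" and hs: "h ` carrier M = carrier N" and p: "lhom L P N p"
  shows "\<exists>q. lhom L P M q \<and> (\<forall>x\<in>carrier P. h (q x) = p x)"
proof -
  obtain \<iota>M :: "_ \<Rightarrow> (nat \<Rightarrow> 'r) set" where iM: "inj_on \<iota>M (carrier M)" using canon_inj[OF fM] by blast
  obtain \<iota>N :: "_ \<Rightarrow> (nat \<Rightarrow> 'r) set" where iN: "inj_on \<iota>N (carrier N)" using canon_inj[OF fN] by blast
  have lM: "lmodule L M" using fM unfolding fg_lmodule_def by auto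
  have lN: "lmodule L N" using fN unfolding fg_lmodule_def by auto
  note TM = transport[OF lM iM] and TN = transport[OF lN iN]
  let ?M = "trans_mod M \<iota>M" and ?N = "trans_mod N \<iota>N"
  let ?jM = "the_inv_into (carrier M) \<iota>M"
  have jM: "lhom L ?M M ?jM" by (rule lhom_inv[OF lM TM(1) TM(2) TM(3)])
  have jMi: "x \<in> carrier M \<Longrightarrow> ?jM (\<iota>M x) = x" for x using the_inv_into_f_f[OF iM] by auto
  define h' where "h' y = \<iota>N (h (?jM y))" for y
  define p' where "p' y = \<iota>N (p y)" for y
  have lh': "lhom L ?M ?N h'" unfolding h'_def by (rule lhom_comp[OF lhom_comp[OF jM h] TN(2)])
  have lp': "lhom L P ?N p'" unfolding p'_def by (rule lhom_comp[OF p TN(2)])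
  have sh': "h' ` carrier ?M = carrier ?N"
  proof
    show "h' ` carrier ?M \<subseteq> carrier ?N" using lhom_closed[OF lh'] by auto
    show "carrier ?N \<subseteq> h' ` carrier ?M"
    proof
      fix z assume "z \<in> carrier ?N"
      then obtain c where c: "c \<in> carrier N" "z = \<iota>N c" by (auto simp: trans_simps)
      then obtain a where a: "a \<in> carrier M" "c = h a" using hs by auto
      have "h' (\<iota>M a) = z" unfolding h'_def using a c jMi by simp
      moreover have "\<iota>M a \<in> carrier ?M" using a by (simp add: trans_simps)
      ultimately show "z \<in> h' ` carrier ?M" by blast
    qed
  qed
  have fM': "fg_lmodule L ?M" by (rule transport_fg[OF fM iM])
  have fN': "fg_lmodule L ?N" by (rule transport_fg[OF fN iN])
  obtain q' where q': "lhom L P ?M q'" and qe: "\<forall>x\<in>carrier P. h' (q' x) = p' x"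
    using pr[unfolded proj_mod_def, THEN conjunct2, rule_format, of ?M ?N h' p'] fM' fN' lh' sh' lp' by auto
  show ?thesis
  proof (intro exI conjI ballI)
    show "lhom L P M (\<lambda>x. ?jM (q' x))" by (rule lhom_comp[OF q' jM])
    fix x assume x: "x \<in> carrier P"
    have "\<iota>N (h (?jM (q' x))) = \<iota>N (p x)" using qe x unfolding h'_def p'_def by blast
    moreover have "h (?jM (q' x)) \<in> carrier N" using lhom_closed[OF h] lhom_closed[OF jM] lhom_closed[OF q' x] by blast
    moreover have "p x \<in> carrier N" using lhom_closed[OF p x] .
    ultimately show "h (?jM (q' x)) = p x" using iN unfolding inj_on_def by blast
  qed
qed



lemma lhom_eq_minus: assumes "lmodule L M" "lmodule L N" "lhom L M N k" "x \<in> carrier M" "y \<in> carrier M"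
  "k (x \<ominus>\<^bsub>M\<^esub> y) = \<zero>\<^bsub>N\<^esub>" shows "k x = k y"
proof -
  interpret N: lmod L N by (unfold_locales, fact)
  have "k x \<ominus>\<^bsub>N\<^esub> k y = \<zero>\<^bsub>N\<^esub>" using lhom_minus[OF assms(1-5)] assms(6) by simp
  thus ?thesis using N.minus_zero_eq lhom_closed[OF assms(3)] assms(4,5) by blast
qed

lemma ker_inj: assumes "lmodule L M" "lmodule L N" "lhom L M N k" "\<forall>x\<in>carrier M. k x = \<zero>\<^bsub>N\<^esub> \<longrightarrow> x = \<zero>\<^bsub>M\<^esub>"
  shows "inj_on k (carrier M)"
proof (rule inj_onI)
  interpret M: lmod L M by (unfold_locales, fact)
  interpret N: lmod L N by (unfold_locales, fact)
  fix x y assume x: "x \<in> carrier M" and y: "y \<in> carrier M" and e: "k x = k y"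
  have "k (x \<ominus>\<^bsub>M\<^esub> y) = \<zero>\<^bsub>N\<^esub>" using lhom_minus[OF assms(1-3) x y] e lhom_closed[OF assms(3) y]
    by (simp add: N.minus_eq N.r_neg)
  hence "x \<ominus>\<^bsub>M\<^esub> y = \<zero>\<^bsub>M\<^esub>" using assms(4) x y by auto
  thus "x = y" using M.minus_zero_eq x y by blast
qed

lemma factor_through:
  assumes lB: "lmodule L B" and lC: "lmodule L C" and lX: "lmodule L Y"
    and f: "lhom L B C f" and fs: "f ` carrier B = carrier C" and k: "lhom L B Y k"
    and kv: "\<forall>b\<in>carrier B. f b = \<zero>\<^bsub>C\<^esub> \<longrightarrow> k b = \<zero>\<^bsub>Y\<^esub>"
  shows "\<exists>u. lhom L C Y u \<and> (\<forall>b\<in>carrier B. u (f b) = k b)"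
proof -
  interpret B: lmod L B by (unfold_locales, fact)
  interpret C: lmod L C by (unfold_locales, fact)
  interpret Y: lmod L Y by (unfold_locales, fact)
  have key: "b1 \<in> carrier B \<Longrightarrow> b2 \<in> carrier B \<Longrightarrow> f b1 = f b2 \<Longrightarrow> k b1 = k b2" for b1 b2
  proof -
    assume b: "b1 \<in> carrier B" "b2 \<in> carrier B" "f b1 = f b2"
    have "f (b1 \<ominus>\<^bsub>B\<^esub> b2) = \<zero>\<^bsub>C\<^esub>" using lhom_minus[OF lB lC f b(1,2)] b(3) lhom_closed[OF f b(2)]
      by (simp add: C.minus_eq C.r_neg)
    hence "k (b1 \<ominus>\<^bsub>B\<^esub> b2) = \<zero>\<^bsub>Y\<^esub>" using kv b by auto
    thus ?thesis using lhom_eq_minus[OF lB lX k b(1,2)] by simp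
  qed
  define sel where "sel c = (SOME b. b \<in> carrier B \<and> f b = c)" for c
  have sel: "c \<in> carrier C \<Longrightarrow> sel c \<in> carrier B \<and> f (sel c) = c" for c
    unfolding sel_def by (rule someI_ex) (use fs in \<open>metis imageE\<close>)
  define u where "u c = k (sel c)" for c
  have uf: "b \<in> carrier B \<Longrightarrow> u (f b) = k b" for b
    unfolding u_def using key sel lhom_closed[OF f] by blast
  have "lhom L C Y u" unfolding lhom_def
  proof (intro conjI ballI)
    show "u \<in> carrier C \<rightarrow> carrier Y" unfolding u_def using sel lhom_closed[OF k] by auto
  next
    fix x y assume x: "x \<in> carrier C" and y: "y \<in> carrier C"
    have "x \<oplus>\<^bsub>C\<^esub> y = f (sel x \<oplus>\<^bsub>B\<^esub> sel y)" using sel[OF x] sel[OF y] lhom_add[OF f] by auto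
    hence "u (x \<oplus>\<^bsub>C\<^esub> y) = k (sel x \<oplus>\<^bsub>B\<^esub> sel y)" using uf sel[OF x] sel[OF y] by auto
    thus "u (x \<oplus>\<^bsub>C\<^esub> y) = u x \<oplus>\<^bsub>Y\<^esub> u y" unfolding u_def using lhom_add[OF k] sel[OF x] sel[OF y] by auto
  next
    fix a x assume a: "a \<in> carrier L" and x: "x \<in> carrier C"
    have "a \<odot>\<^bsub>C\<^esub> x = f (a \<odot>\<^bsub>B\<^esub> sel x)" using sel[OF x] lhom_smult[OF f a] by auto
    hence "u (a \<odot>\<^bsub>C\<^esub> x) = k (a \<odot>\<^bsub>B\<^esub> sel x)" using uf sel[OF x] a by auto
    thus "u (a \<odot>\<^bsub>C\<^esub> x) = a \<odot>\<^bsub>Y\<^esub> u x" unfolding u_def using lhom_smult[OF k a] sel[OF x] by auto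
  qed
  thus ?thesis using uf by blast
qed

lemma into_kernel:
  assumes lA: "lmodule L A" and lB: "lmodule L B" and lC: "lmodule L C" and lX: "lmodule L Y"
    and se: "short_exact L A B C g f" and k: "lhom L Y B k" and kv: "\<forall>x\<in>carrier Y. f (k x) = \<zero>\<^bsub>C\<^esub>"
  shows "\<exists>t. lhom L Y A t \<and> (\<forall>x\<in>carrier Y. g (t x) = k x)"
proof -
  have g: "lhom L A B g" and gi: "inj_on g (carrier A)" and im: "g ` carrier A = {y \<in> carrier B. f y = \<zero>\<^bsub>C\<^esub>}"
    using se unfolding short_exact_def by auto
  interpret A: lmod L A by (unfold_locales, fact)
  interpret B: lmod L B by (unfold_locales, fact)
  interpret Y: lmod L Y by (unfold_locales, fact)
  define t where "t x = the_inv_into (carrier A) g (k x)" for x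
  have kin: "x \<in> carrier Y \<Longrightarrow> k x \<in> g ` carrier A" for x using im kv lhom_closed[OF k] by auto
  have tc: "x \<in> carrier Y \<Longrightarrow> t x \<in> carrier A" for x unfolding t_def using kin the_inv_into_into[OF gi] by blast
  have gt: "x \<in> carrier Y \<Longrightarrow> g (t x) = k x" for x unfolding t_def using kin f_the_inv_into_f[OF gi] by blast
  have "lhom L Y A t" unfolding lhom_def
  proof (intro conjI ballI)
    show "t \<in> carrier Y \<rightarrow> carrier A" using tc by auto
  next
    fix x y assume x: "x \<in> carrier Y" and y: "y \<in> carrier Y"
    have "g (t x \<oplus>\<^bsub>A\<^esub> t y) = g (t (x \<oplus>\<^bsub>Y\<^esub> y))" using lhom_add[OF g] lhom_add[OF k] tc gt x y by simp
    thus "t (x \<oplus>\<^bsub>Y\<^esub> y) = t x \<oplus>\<^bsub>A\<^esub> t y" using gi tc x y unfolding inj_on_def by (metis A.a_closed Y.a_closed)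
  next
    fix a x assume a: "a \<in> carrier L" and x: "x \<in> carrier Y"
    have "g (a \<odot>\<^bsub>A\<^esub> t x) = g (t (a \<odot>\<^bsub>Y\<^esub> x))" using lhom_smult[OF g a] lhom_smult[OF k a] tc gt x a by simp
    thus "t (a \<odot>\<^bsub>Y\<^esub> x) = a \<odot>\<^bsub>A\<^esub> t x" using gi tc x a unfolding inj_on_def by (metis A.sm_closed Y.sm_closed)
  qed
  thus ?thesis using gt by blast
qed



context lmod begin

lemma add_minus_cancel: "x \<in> carrier M \<Longrightarrow> u \<in> carrier M \<Longrightarrow> u \<oplus> (x \<ominus> u) = x"
proof -
  assume x: "x \<in> carrier M" and u: "u \<in> carrier M"
  have "u \<oplus> (x \<ominus> u) = x \<oplus> (u \<oplus> \<ominus> u)" using x u by (simp add: minus_eq a_lcomm)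
  thus ?thesis using x u by (simp add: r_neg)
qed

lemma proj_exists:
  assumes U: "submod L M U" and V: "submod L M V" and int: "U \<inter> V = {\<zero>}"
    and sum: "{x \<oplus> y | x y. x \<in> U \<and> y \<in> V} = carrier M"
  shows "\<exists>e. lhom L M M e \<and> (\<forall>x\<in>carrier M. e x \<in> U \<and> x \<ominus> e x \<in> V) \<and> (\<forall>x\<in>U. e x = x) \<and> (\<forall>x\<in>V. e x = \<zero>)"
proof -
  have Um: "x \<in> U \<Longrightarrow> x \<in> carrier M" for x using U submod_sub by auto
  have Vm: "x \<in> V \<Longrightarrow> x \<in> carrier M" for x using V submod_sub by auto
  have uniq: "u1 \<in> U \<Longrightarrow> u2 \<in> U \<Longrightarrow> v1 \<in> V \<Longrightarrow> v2 \<in> V \<Longrightarrow> u1 \<oplus> v1 = u2 \<oplus> v2 \<Longrightarrow> u1 = u2" for u1 u2 v1 v2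
  proof -
    assume a: "u1 \<in> U" "u2 \<in> U" "v1 \<in> V" "v2 \<in> V" "u1 \<oplus> v1 = u2 \<oplus> v2"
    have m: "u1 \<in> carrier M" "u2 \<in> carrier M" "v1 \<in> carrier M" "v2 \<in> carrier M" using a Um Vm by auto
    have "u1 \<ominus> u2 = v2 \<ominus> v1"
    proof -
      have e1: "(u1 \<ominus> u2) \<oplus> (u2 \<oplus> v1) = u1 \<oplus> v1" using m by (simp add: minus_eq a_assoc r_neg1)
      have e2: "(v2 \<ominus> v1) \<oplus> (u2 \<oplus> v1) = v2 \<oplus> u2" using m
        by (simp add: minus_eq a_assoc a_comm[of u2 v1] r_neg1)
      have "(u1 \<ominus> u2) \<oplus> (u2 \<oplus> v1) = (v2 \<ominus> v1) \<oplus> (u2 \<oplus> v1)" using e1 e2 a(5) m by (simp add: a_comm)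
      thus ?thesis using m by (meson add.right_cancel a_closed minus_closed)
    qed
    moreover have "u1 \<ominus> u2 \<in> U" using submod_minus[OF U a(1,2)] .
    moreover have "v2 \<ominus> v1 \<in> V" using submod_minus[OF V a(4,3)] .
    ultimately have "u1 \<ominus> u2 = \<zero>" using int by auto
    thus ?thesis using minus_zero_eq m by blast
  qed
  have ex: "x \<in> carrier M \<Longrightarrow> \<exists>u. u \<in> U \<and> x \<ominus> u \<in> V" for x
  proof -
    assume "x \<in> carrier M"
    then obtain u v where uv: "u \<in> U" "v \<in> V" "x = u \<oplus> v" using sum by blast
    have "u \<in> carrier M" "v \<in> carrier M" using uv Um Vm by auto
    hence "x \<ominus> u = v" using uv by (simp add: minus_eq a_comm[of u v] a_assoc r_neg2 r_neg)
    thus ?thesis using uv by auto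
  qed
  define e where "e x = (SOME u. u \<in> U \<and> x \<ominus> u \<in> V)" for x
  have e: "x \<in> carrier M \<Longrightarrow> e x \<in> U \<and> x \<ominus> e x \<in> V" for x unfolding e_def using ex by (rule someI_ex)
  have char: "u \<in> U \<Longrightarrow> v \<in> V \<Longrightarrow> e (u \<oplus> v) = u" for u v
  proof -
    assume u: "u \<in> U" and v: "v \<in> V"
    have uv: "u \<oplus> v \<in> carrier M" using u v Um Vm by auto
    have "e (u \<oplus> v) \<oplus> ((u \<oplus> v) \<ominus> e (u \<oplus> v)) = u \<oplus> v" using add_minus_cancel uv e[OF uv] Um by blast
    thus ?thesis using uniq[of "e (u \<oplus> v)" u "(u \<oplus> v) \<ominus> e (u \<oplus> v)" v] e[OF uv] u v by auto
  qed
  have dec: "x \<in> carrier M \<Longrightarrow> x = e x \<oplus> (x \<ominus> e x)" for x using add_minus_cancel e Um by metis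
  have "lhom L M M e" unfolding lhom_def
  proof (intro conjI ballI)
    show "e \<in> carrier M \<rightarrow> carrier M" using e Um by auto
  next
    fix x y assume x: "x \<in> carrier M" and y: "y \<in> carrier M"
    let ?u1 = "e x" and ?v1 = "x \<ominus> e x" and ?u2 = "e y" and ?v2 = "y \<ominus> e y"
    have m: "?u1 \<in> carrier M" "?v1 \<in> carrier M" "?u2 \<in> carrier M" "?v2 \<in> carrier M" using e x y Um Vm by auto
    have "x \<oplus> y = (?u1 \<oplus> ?u2) \<oplus> (?v1 \<oplus> ?v2)" using dec[OF x] dec[OF y] m by (metis a_ac(1) a_ac(3) a_closed)
    moreover have "?u1 \<oplus> ?u2 \<in> U" "?v1 \<oplus> ?v2 \<in> V" using e x y submod_add U V by auto
    ultimately show "e (x \<oplus> y) = e x \<oplus> e y" using char by metis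
  next
    fix a x assume a: "a \<in> carrier L" and x: "x \<in> carrier M"
    have m: "e x \<in> carrier M" "x \<ominus> e x \<in> carrier M" using e x Um Vm by auto
    have "a \<odot> x = a \<odot> e x \<oplus> a \<odot> (x \<ominus> e x)" using dec[OF x] m sm_rdistr[OF a] by metis
    moreover have "a \<odot> e x \<in> U" "a \<odot> (x \<ominus> e x) \<in> V" using e x submod_sm U V a by auto
    ultimately show "e (a \<odot> x) = a \<odot> e x" using char by metis
  qed
  moreover have "\<forall>x\<in>U. e x = x" using char[of _ \<zero>] submod_zero[OF V] Um by (metis r_zero)
  moreover have "\<forall>x\<in>V. e x = \<zero>" using char[of \<zero>] submod_zero[OF U] Vm by (metis l_zero)
  ultimately show ?thesis using e by blast
qed


lemma inj_funpow: "inj_on k (carrier M) \<Longrightarrow> k \<in> carrier M \<rightarrow> carrier M \<Longrightarrow> inj_on (k^^n) (carrier M)"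
proof (induct n)
  case 0 then show ?case by simp
next
  case (Suc n)
  have kc: "z \<in> carrier M \<Longrightarrow> (k^^j) z \<in> carrier M" for z j
    using Suc.prems(2) by (induct j) auto
  hence "(k^^n) ` carrier M \<subseteq> carrier M" by auto
  hence "inj_on k ((k^^n) ` carrier M)" using Suc inj_on_subset by blast
  thus ?case using Suc comp_inj_on[of "k^^n" "carrier M" k] by (simp add: comp_def)
qed

lemma local_two:
  assumes aa: "artin_algebra R phi L" and fg: "fgL L M I gen" and ind: "indecomposable L M"
    and h1: "lhom L M M \<phi>1" and h2: "lhom L M M \<phi>2"
    and bij: "bij_betw (\<lambda>x. \<phi>1 x \<oplus> \<phi>2 x) (carrier M) (carrier M)"
  shows "bij_betw \<phi>1 (carrier M) (carrier M) \<or> bij_betw \<phi>2 (carrier M) (carrier M)"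
proof -
  let ?\<theta> = "\<lambda>x. \<phi>1 x \<oplus> \<phi>2 x"
  have th: "lhom L M M ?\<theta>" unfolding lhom_def using h1 h2 unfolding lhom_def
    by (auto simp: Pi_def a_ac sm_rdistr)
  define \<sigma> where "\<sigma> = the_inv_into (carrier M) ?\<theta>"
  have sg: "lhom L M M \<sigma>" unfolding \<sigma>_def by (rule lhom_inv[OF lm lm th bij])
  have ti: "inj_on ?\<theta> (carrier M)" and ts: "?\<theta> ` carrier M = carrier M" using bij unfolding bij_betw_def by auto
  have ts': "z \<in> carrier M \<Longrightarrow> ?\<theta> (\<sigma> z) = z" for z unfolding \<sigma>_def using f_the_inv_into_f[OF ti] ts by auto
  have st: "a \<in> carrier M \<Longrightarrow> \<sigma> (?\<theta> a) = a" for a unfolding \<sigma>_def using the_inv_into_f_f[OF ti] by auto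
  define x where "x a = \<sigma> (\<phi>1 a)" for a
  define y where "y a = \<sigma> (\<phi>2 a)" for a
  have lx: "lhom L M M x" unfolding x_def by (rule lhom_comp[OF h1 sg])
  have ly: "lhom L M M y" unfolding y_def by (rule lhom_comp[OF h2 sg])
  have xy: "a \<in> carrier M \<Longrightarrow> x a \<oplus> y a = a" for a
    unfolding x_def y_def using lhom_add[OF sg] lhom_closed[OF h1] lhom_closed[OF h2] st by metis
  have bk: "bij_betw x (carrier M) (carrier M) \<Longrightarrow> bij_betw (\<lambda>a. ?\<theta> (x a)) (carrier M) (carrier M)"
    using bij_betw_trans[of x "carrier M" "carrier M" "?\<theta>" "carrier M"] bij by (simp add: comp_def)
  have b1: "bij_betw x (carrier M) (carrier M) \<Longrightarrow> bij_betw \<phi>1 (carrier M) (carrier M)"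
  proof -
    assume "bij_betw x (carrier M) (carrier M)"
    hence "bij_betw (\<lambda>a. ?\<theta> (x a)) (carrier M) (carrier M)" by (rule bk)
    moreover have "a \<in> carrier M \<Longrightarrow> ?\<theta> (x a) = \<phi>1 a" for a unfolding x_def using ts' lhom_closed[OF h1] by blast
    ultimately show ?thesis using bij_betw_cong by (metis (no_types, lifting))
  qed
  have b2: "bij_betw y (carrier M) (carrier M) \<Longrightarrow> bij_betw \<phi>2 (carrier M) (carrier M)"
  proof -
    assume yb: "bij_betw y (carrier M) (carrier M)"
    have "bij_betw (\<lambda>a. ?\<theta> (y a)) (carrier M) (carrier M)"
      using bij_betw_trans[of y "carrier M" "carrier M" "?\<theta>" "carrier M"] bij yb by (simp add: comp_def)
    moreover have "a \<in> carrier M \<Longrightarrow> ?\<theta> (y a) = \<phi>2 a" for a unfolding y_def using ts' lhom_closed[OF h2] by blast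
    ultimately show ?thesis using bij_betw_cong by (metis (no_types, lifting))
  qed
  have "bij_betw x (carrier M) (carrier M) \<or> (\<exists>n. \<forall>a\<in>carrier M. (x^^n) a = \<zero>)"
    by (rule fitting[OF aa fg ind lx])
  thus ?thesis
  proof
    assume "bij_betw x (carrier M) (carrier M)" thus ?thesis using b1 by blast
  next
    assume "\<exists>n. \<forall>a\<in>carrier M. (x^^n) a = \<zero>"
    then obtain n where n: "\<forall>a\<in>carrier M. (x^^n) a = \<zero>" by blast
    have yi: "inj_on y (carrier M)"
    proof (rule ker_inj[OF lm lm ly], intro ballI impI)
      fix a assume a: "a \<in> carrier M" and ya: "y a = \<zero>"
      have xa: "x a = a" using xy[OF a] ya lhom_closed[OF lx a] by simp
      have "(x^^k) a = a" for k by (induct k) (simp_all add: xa)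
      thus "a = \<zero>" using n a by metis
    qed
    have "bij_betw y (carrier M) (carrier M) \<or> (\<exists>n. \<forall>a\<in>carrier M. (y^^n) a = \<zero>)"
      by (rule fitting[OF aa fg ind ly])
    thus ?thesis
    proof
      assume "bij_betw y (carrier M) (carrier M)" thus ?thesis using b2 by blast
    next
      assume "\<exists>n. \<forall>a\<in>carrier M. (y^^n) a = \<zero>"
      then obtain m where m: "\<forall>a\<in>carrier M. (y^^m) a = \<zero>" by blast
      have yc: "y \<in> carrier M \<rightarrow> carrier M" using lhom_closed[OF ly] by auto
      have "inj_on (y^^m) (carrier M)" by (rule inj_funpow[OF yi yc])
      hence "\<forall>a\<in>carrier M. a = \<zero>" using m zero_closed unfolding inj_on_def by metis
      hence "carrier M = {\<zero>}" by auto
      thus ?thesis using ind unfolding indecomposable_def by blast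
    qed
  qed
qed

end



context lmod begin
lemma sm_neg_r: "a \<in> carrier L \<Longrightarrow> x \<in> carrier M \<Longrightarrow> a \<odot> (\<ominus> x) = \<ominus> (a \<odot> x)"
proof -
  assume a: "a \<in> carrier L" and x: "x \<in> carrier M"
  have "a \<odot> (\<ominus> x) \<oplus> a \<odot> x = \<zero>" using sm_rdistr[OF a, of "\<ominus> x" x] x a by (simp add: l_neg)
  thus ?thesis using a x by (metis a_inv_closed minus_equality sm_closed)
qed
end

lemma lhom_plus: assumes "lmodule L M" "lmodule L N" "lhom L M N h1" "lhom L M N h2"
  shows "lhom L M N (\<lambda>x. h1 x \<oplus>\<^bsub>N\<^esub> h2 x)"
proof -
  interpret M: lmod L M by (unfold_locales, fact)
  interpret N: lmod L N by (unfold_locales, fact)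
  show ?thesis using assms(3,4) unfolding lhom_def by (auto simp: Pi_def N.a_ac N.sm_rdistr)
qed

lemma lhom_diff: assumes "lmodule L M" "lmodule L N" "lhom L M N h1" "lhom L M N h2"
  shows "lhom L M N (\<lambda>x. h1 x \<ominus>\<^bsub>N\<^esub> h2 x)"
proof -
  interpret M: lmod L M by (unfold_locales, fact)
  interpret N: lmod L N by (unfold_locales, fact)
  show ?thesis using assms(3,4) unfolding lhom_def
    by (auto simp: Pi_def N.minus_eq N.minus_add N.a_ac N.sm_rdistr N.sm_neg_r)
qed

locale ses_ctx =
  fixes R :: "'k ring" and phi :: "'k \<Rightarrow> 'r" and L :: "'r ring"
    and A :: "('r, 'a) module" and B :: "('r, 'b) module" and C :: "('r, 'c) module"
    and g :: "'a \<Rightarrow> 'b" and f :: "'b \<Rightarrow> 'c"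
  assumes aa: "artin_algebra R phi L"
    and fA: "fg_lmodule L A" and fB: "fg_lmodule L B" and fC: "fg_lmodule L C"
    and se: "short_exact L A B C g f"
    and ns: "\<not> ses_splits L B C f"
    and pB: "proj_mod L B" and iB: "inj_mod L B"
begin

lemma lA: "lmodule L A" using fA unfolding fg_lmodule_def by auto
lemma lB: "lmodule L B" using fB unfolding fg_lmodule_def by auto
lemma lC: "lmodule L C" using fC unfolding fg_lmodule_def by auto
lemma g: "lhom L A B g" using se unfolding short_exact_def by auto
lemma f: "lhom L B C f" using se unfolding short_exact_def by auto
lemma gi: "inj_on g (carrier A)" using se unfolding short_exact_def by auto
lemma fs: "f ` carrier B = carrier C" using se unfolding short_exact_def by auto
lemma im: "g ` carrier A = {y \<in> carrier B. f y = \<zero>\<^bsub>C\<^esub>}" using se unfolding short_exact_def by auto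

sublocale A: lmod L A by (unfold_locales, rule lA)
sublocale B: lmod L B by (unfold_locales, rule lB)
sublocale C: lmod L C by (unfold_locales, rule lC)

lemma gz: "g \<zero>\<^bsub>A\<^esub> = \<zero>\<^bsub>B\<^esub>" by (rule lhom_zero[OF lA lB g])
lemma fz: "f \<zero>\<^bsub>B\<^esub> = \<zero>\<^bsub>C\<^esub>" by (rule lhom_zero[OF lB lC f])
lemma fg0: "a \<in> carrier A \<Longrightarrow> f (g a) = \<zero>\<^bsub>C\<^esub>" using im by auto
lemma kerf: "b \<in> carrier B \<Longrightarrow> f b = \<zero>\<^bsub>C\<^esub> \<Longrightarrow> \<exists>a\<in>carrier A. b = g a" using im by auto
lemma gc: "a \<in> carrier A \<Longrightarrow> g a \<in> carrier B" using lhom_closed[OF g] .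
lemma fc: "b \<in> carrier B \<Longrightarrow> f b \<in> carrier C" using lhom_closed[OF f] .
lemma g0: "a \<in> carrier A \<Longrightarrow> g a = \<zero>\<^bsub>B\<^esub> \<Longrightarrow> a = \<zero>\<^bsub>A\<^esub>"
  using gi gz unfolding inj_on_def by (metis A.zero_closed)
lemma fsurj: "c \<in> carrier C \<Longrightarrow> \<exists>b\<in>carrier B. c = f b" using fs by auto

lemma no_section: "lhom L C B u \<Longrightarrow> \<forall>c\<in>carrier C. f (u c) = c \<Longrightarrow> False"
  using ns unfolding ses_splits_def by blast

lemma no_retraction: assumes r: "lhom L B A r" and rg: "\<forall>a\<in>carrier A. r (g a) = a" shows False
proof -
  define \<sigma> where "\<sigma> b = b \<ominus>\<^bsub>B\<^esub> g (r b)" for b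
  have ls: "lhom L B B \<sigma>" unfolding \<sigma>_def by (rule lhom_diff[OF lB lB lhom_id lhom_comp[OF r g]])
  have "\<forall>b\<in>carrier B. f b = \<zero>\<^bsub>C\<^esub> \<longrightarrow> \<sigma> b = \<zero>\<^bsub>B\<^esub>"
  proof (intro ballI impI)
    fix b assume b: "b \<in> carrier B" "f b = \<zero>\<^bsub>C\<^esub>"
    then obtain a where a: "a \<in> carrier A" "b = g a" using kerf by blast
    show "\<sigma> b = \<zero>\<^bsub>B\<^esub>" unfolding \<sigma>_def using a rg gc by (simp add: B.minus_eq B.r_neg)
  qed
  then obtain u where u: "lhom L C B u" and uf: "\<forall>b\<in>carrier B. u (f b) = \<sigma> b"
    using factor_through[OF lB lC lB f fs ls] by blast
  have "\<forall>c\<in>carrier C. f (u c) = c"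
  proof
    fix c assume "c \<in> carrier C"
    then obtain b where b: "b \<in> carrier B" "c = f b" using fsurj by blast
    have rb: "r b \<in> carrier A" using lhom_closed[OF r b(1)] .
    have "f (u c) = f (\<sigma> b)" using uf b by simp
    also have "\<dots> = f b \<ominus>\<^bsub>C\<^esub> f (g (r b))" unfolding \<sigma>_def by (rule lhom_minus[OF lB lC f b(1) gc[OF rb]])
    also have "\<dots> = c" using fg0[OF rb] b fc by (simp add: C.minus_eq)
    finally show "f (u c) = c" .
  qed
  thus False using no_section[OF u] by blast
qed

lemma K1:
  assumes ind: "indecomposable L A" and h: "lhom L B B h" and fh: "\<forall>b\<in>carrier B. f (h b) = f b"
    and ph: "lhom L A A \<phi>" and gph: "\<forall>a\<in>carrier A. g (\<phi> a) = h (g a)"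
  shows "bij_betw \<phi> (carrier A) (carrier A)"
proof -
  obtain S where S: "fgL L A S (\<lambda>x. x)" using fg_fgL[OF fA] by blast
  have "bij_betw \<phi> (carrier A) (carrier A) \<or> (\<exists>n. \<forall>x\<in>carrier A. (\<phi>^^n) x = \<zero>\<^bsub>A\<^esub>)"
    by (rule A.fitting[OF aa S ind ph])
  moreover have False if n: "\<forall>x\<in>carrier A. (\<phi>^^n) x = \<zero>\<^bsub>A\<^esub>" for n
  proof -
    have hgn: "a \<in> carrier A \<Longrightarrow> (h^^k) (g a) = g ((\<phi>^^k) a)" for a k
    proof (induct k)
      case 0 then show ?case by simp
    next
      case (Suc k)
      have "(\<phi>^^k) a \<in> carrier A" using lhom_closed[OF lhom_funpow[OF ph] Suc(2)] .
      then show ?case using Suc gph by simp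
    qed
    have fhn: "b \<in> carrier B \<Longrightarrow> f ((h^^k) b) = f b" for b k
    proof (induct k)
      case 0 then show ?case by simp
    next
      case (Suc k)
      have "(h^^k) b \<in> carrier B" using lhom_closed[OF lhom_funpow[OF h] Suc(2)] .
      then show ?case using Suc fh by simp
    qed
    have "\<forall>b\<in>carrier B. f b = \<zero>\<^bsub>C\<^esub> \<longrightarrow> (h^^n) b = \<zero>\<^bsub>B\<^esub>"
    proof (intro ballI impI)
      fix b assume "b \<in> carrier B" "f b = \<zero>\<^bsub>C\<^esub>"
      then obtain a where a: "a \<in> carrier A" "b = g a" using kerf by blast
      show "(h^^n) b = \<zero>\<^bsub>B\<^esub>" using a hgn n gz by simp
    qed
    then obtain u where u: "lhom L C B u" and uf: "\<forall>b\<in>carrier B. u (f b) = (h^^n) b"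
      using factor_through[OF lB lC lB f fs lhom_funpow[OF h]] by blast
    have "\<forall>c\<in>carrier C. f (u c) = c"
    proof
      fix c assume "c \<in> carrier C"
      then obtain b where b: "b \<in> carrier B" "c = f b" using fsurj by blast
      show "f (u c) = c" using uf b fhn by simp
    qed
    thus False using no_section[OF u] by blast
  qed
  ultimately show ?thesis by blast
qed

lemma K1':
  assumes ind: "indecomposable L C" and h: "lhom L B B h" and hg: "\<forall>a\<in>carrier A. h (g a) = g a"
    and ps: "lhom L C C \<psi>" and psf: "\<forall>b\<in>carrier B. \<psi> (f b) = f (h b)"
  shows "bij_betw \<psi> (carrier C) (carrier C)"
proof -
  obtain S where S: "fgL L C S (\<lambda>x. x)" using fg_fgL[OF fC] by blast
  have "bij_betw \<psi> (carrier C) (carrier C) \<or> (\<exists>n. \<forall>x\<in>carrier C. (\<psi>^^n) x = \<zero>\<^bsub>C\<^esub>)"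
    by (rule C.fitting[OF aa S ind ps])
  moreover have False if n: "\<forall>x\<in>carrier C. (\<psi>^^n) x = \<zero>\<^bsub>C\<^esub>" for n
  proof -
    have fhn: "b \<in> carrier B \<Longrightarrow> f ((h^^k) b) = (\<psi>^^k) (f b)" for b k
    proof (induct k)
      case 0 then show ?case by simp
    next
      case (Suc k)
      have hk: "(h^^k) b \<in> carrier B" using lhom_closed[OF lhom_funpow[OF h] Suc(2)] .
      have "f (h ((h^^k) b)) = \<psi> (f ((h^^k) b))" using psf hk by simp
      then show ?case using Suc by simp
    qed
    have hgn: "a \<in> carrier A \<Longrightarrow> (h^^k) (g a) = g a" for a k by (induct k) (simp_all add: hg)
    have "\<forall>b\<in>carrier B. f ((h^^n) b) = \<zero>\<^bsub>C\<^esub>" using fhn n fc by simp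
    then obtain t where t: "lhom L B A t" and gt: "\<forall>b\<in>carrier B. g (t b) = (h^^n) b"
      using into_kernel[OF lA lB lC lB se lhom_funpow[OF h]] by blast
    have "\<forall>a\<in>carrier A. t (g a) = a"
    proof
      fix a assume a: "a \<in> carrier A"
      have "g (t (g a)) = g a" using gt hgn a gc by simp
      thus "t (g a) = a" using gi a lhom_closed[OF t gc[OF a]] unfolding inj_on_def by blast
    qed
    thus False using no_retraction[OF t] by blast
  qed
  ultimately show ?thesis by blast
qed

end



context ses_ctx begin

lemma inv_facts:
  assumes lm: "lmodule L M" and ph: "lhom L M M \<phi>" and bj: "bij_betw \<phi> (carrier M) (carrier M)"
  shows "lhom L M M (the_inv_into (carrier M) \<phi>)"
    "\<forall>a\<in>carrier M. \<phi> (the_inv_into (carrier M) \<phi> a) = a"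
    "\<forall>a\<in>carrier M. the_inv_into (carrier M) \<phi> a \<in> carrier M"
proof -
  show "lhom L M M (the_inv_into (carrier M) \<phi>)" by (rule lhom_inv[OF lm lm ph bj])
  have i: "inj_on \<phi> (carrier M)" and s: "\<phi> ` carrier M = carrier M" using bj unfolding bij_betw_def by auto
  show "\<forall>a\<in>carrier M. \<phi> (the_inv_into (carrier M) \<phi> a) = a" using f_the_inv_into_f[OF i] s by auto
  show "\<forall>a\<in>carrier M. the_inv_into (carrier M) \<phi> a \<in> carrier M" using the_inv_into_into[OF i] s by auto
qed

lemma right_min:
  assumes ind: "indecomposable L A" and lmin: "left_minimal L A B g"
  shows "right_minimal L B C f"
  unfolding right_minimal_def
proof (intro allI impI)
  fix h assume "lhom L B B h \<and> (\<forall>x\<in>carrier B. f (h x) = f x)"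
  hence h: "lhom L B B h" and fh: "\<forall>x\<in>carrier B. f (h x) = f x" by auto
  have kv: "\<forall>a\<in>carrier A. f (h (g a)) = \<zero>\<^bsub>C\<^esub>" using fh gc fg0 by simp
  obtain \<phi> where ph: "lhom L A A \<phi>" and gph: "\<forall>a\<in>carrier A. g (\<phi> a) = h (g a)"
    using into_kernel[OF lA lB lC lA se lhom_comp[OF g h] kv] by blast
  have bj: "bij_betw \<phi> (carrier A) (carrier A)" by (rule K1[OF ind h fh ph gph])
  note I = inv_facts[OF lA ph bj]
  let ?i = "the_inv_into (carrier A) \<phi>"
  obtain k where k: "lhom L B B k" and kg: "\<forall>a\<in>carrier A. k (g a) = g (?i a)"
    using inj_ext[OF iB fA fB g gi lhom_comp[OF I(1) g]] by blast
  have "\<forall>a\<in>carrier A. h (k (g a)) = g a"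
  proof
    fix a assume a: "a \<in> carrier A"
    have "h (k (g a)) = h (g (?i a))" using kg a by simp
    also have "\<dots> = g (\<phi> (?i a))" using gph I(3) a by simp
    also have "\<dots> = g a" using I(2) a by simp
    finally show "h (k (g a)) = g a" .
  qed
  hence bhk: "bij_betw (\<lambda>x. h (k x)) (carrier B) (carrier B)"
    using lmin lhom_comp[OF k h] unfolding left_minimal_def by blast
  have sur: "h ` carrier B = carrier B"
  proof
    show "h ` carrier B \<subseteq> carrier B" using lhom_closed[OF h] by auto
    show "carrier B \<subseteq> h ` carrier B"
    proof
      fix y assume "y \<in> carrier B"
      then obtain x where "x \<in> carrier B" "y = h (k x)" using bhk unfolding bij_betw_def by auto
      thus "y \<in> h ` carrier B" using lhom_closed[OF k] by auto
    qed
  qed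
  have inj: "inj_on h (carrier B)"
  proof (rule ker_inj[OF lB lB h], intro ballI impI)
    fix b assume b: "b \<in> carrier B" and hb: "h b = \<zero>\<^bsub>B\<^esub>"
    have "f b = \<zero>\<^bsub>C\<^esub>" using fh b hb fz by metis
    then obtain a where a: "a \<in> carrier A" "b = g a" using kerf b by blast
    have "g (\<phi> a) = \<zero>\<^bsub>B\<^esub>" using gph a hb by simp
    hence "\<phi> a = \<zero>\<^bsub>A\<^esub>" using g0 lhom_closed[OF ph a(1)] by blast
    moreover have "\<phi> \<zero>\<^bsub>A\<^esub> = \<zero>\<^bsub>A\<^esub>" by (rule lhom_zero[OF lA lA ph])
    ultimately have "a = \<zero>\<^bsub>A\<^esub>" using bj a unfolding bij_betw_def inj_on_def by (metis A.zero_closed)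
    thus "b = \<zero>\<^bsub>B\<^esub>" using a gz by simp
  qed
  show "bij_betw h (carrier B) (carrier B)" using inj sur unfolding bij_betw_def by simp
qed

lemma K2:
  assumes lmin: "left_minimal L A B g" and p: "lhom L B B p" and e: "lhom L C C e"
    and fp: "\<forall>b\<in>carrier B. f (p b) = e (f b)" and ph: "lhom L A A \<phi>"
    and bj: "bij_betw \<phi> (carrier A) (carrier A)" and gph: "\<forall>a\<in>carrier A. g (\<phi> a) = p (g a)"
  shows "carrier C \<subseteq> e ` carrier C"
proof -
  note I = inv_facts[OF lA ph bj]
  let ?i = "the_inv_into (carrier A) \<phi>"
  obtain k where k: "lhom L B B k" and kg: "\<forall>a\<in>carrier A. k (g a) = g (?i a)"
    using inj_ext[OF iB fA fB g gi lhom_comp[OF I(1) g]] by blast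
  have "\<forall>a\<in>carrier A. p (k (g a)) = g a"
  proof
    fix a assume a: "a \<in> carrier A"
    have "p (k (g a)) = p (g (?i a))" using kg a by simp
    also have "\<dots> = g (\<phi> (?i a))" using gph I(3) a by simp
    also have "\<dots> = g a" using I(2) a by simp
    finally show "p (k (g a)) = g a" .
  qed
  hence bpk: "bij_betw (\<lambda>x. p (k x)) (carrier B) (carrier B)"
    using lmin lhom_comp[OF k p] unfolding left_minimal_def by blast
  show ?thesis
  proof
    fix c assume "c \<in> carrier C"
    then obtain b where b: "b \<in> carrier B" "c = f b" using fsurj by blast
    then obtain x where x: "x \<in> carrier B" "b = p (k x)" using bpk unfolding bij_betw_def by auto
    have "c = e (f (k x))" using b x fp lhom_closed[OF k] by simp
    thus "c \<in> e ` carrier C" using fc lhom_closed[OF k x(1)] by blast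
  qed
qed

lemma indec_C:
  assumes ind: "indecomposable L A" and lmin: "left_minimal L A B g"
  shows "indecomposable L C"
  unfolding indecomposable_def
proof (intro conjI allI impI)
  show "carrier C \<noteq> {\<zero>\<^bsub>C\<^esub>}"
  proof
    assume C0: "carrier C = {\<zero>\<^bsub>C\<^esub>}"
    have u: "lhom L C B (\<lambda>c. \<zero>\<^bsub>B\<^esub>)" unfolding lhom_def by auto
    have "\<forall>c\<in>carrier C. f \<zero>\<^bsub>B\<^esub> = c" using C0 fz by auto
    thus False using no_section[OF u] by auto
  qed
next
  fix U V assume "submod L C U \<and> submod L C V \<and> U \<inter> V = {\<zero>\<^bsub>C\<^esub>} \<and> {x \<oplus>\<^bsub>C\<^esub> y |x y. x \<in> U \<and> y \<in> V} = carrier C"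
  hence sU: "submod L C U" and sV: "submod L C V" and int: "U \<inter> V = {\<zero>\<^bsub>C\<^esub>}"
    and sum: "{x \<oplus>\<^bsub>C\<^esub> y |x y. x \<in> U \<and> y \<in> V} = carrier C" by auto
  obtain eU where eU: "lhom L C C eU" and eUp: "\<forall>x\<in>carrier C. eU x \<in> U \<and> x \<ominus>\<^bsub>C\<^esub> eU x \<in> V"
    using C.proj_exists[OF sU sV int sum] by blast
  define eV where "eV x = x \<ominus>\<^bsub>C\<^esub> eU x" for x
  have leV: "lhom L C C eV" unfolding eV_def by (rule lhom_diff[OF lC lC lhom_id eU])
  obtain p1 where p1: "lhom L B B p1" and fp1: "\<forall>b\<in>carrier B. f (p1 b) = eU (f b)"
    using proj_ext[OF pB fB fC f fs lhom_comp[OF f eU]] by blast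
  obtain p2 where p2: "lhom L B B p2" and fp2: "\<forall>b\<in>carrier B. f (p2 b) = eV (f b)"
    using proj_ext[OF pB fB fC f fs lhom_comp[OF f leV]] by blast
  have eU0: "eU \<zero>\<^bsub>C\<^esub> = \<zero>\<^bsub>C\<^esub>" by (rule lhom_zero[OF lC lC eU])
  have eV0: "eV \<zero>\<^bsub>C\<^esub> = \<zero>\<^bsub>C\<^esub>" by (rule lhom_zero[OF lC lC leV])
  have "\<forall>a\<in>carrier A. f (p1 (g a)) = \<zero>\<^bsub>C\<^esub>" using fp1 gc fg0 eU0 by simp
  then obtain \<phi>1 where ph1: "lhom L A A \<phi>1" and gph1: "\<forall>a\<in>carrier A. g (\<phi>1 a) = p1 (g a)"
    using into_kernel[OF lA lB lC lA se lhom_comp[OF g p1]] by blast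
  have "\<forall>a\<in>carrier A. f (p2 (g a)) = \<zero>\<^bsub>C\<^esub>" using fp2 gc fg0 eV0 by simp
  then obtain \<phi>2 where ph2: "lhom L A A \<phi>2" and gph2: "\<forall>a\<in>carrier A. g (\<phi>2 a) = p2 (g a)"
    using into_kernel[OF lA lB lC lA se lhom_comp[OF g p2]] by blast
  let ?\<theta> = "\<lambda>b. p1 b \<oplus>\<^bsub>B\<^esub> p2 b"
  have th: "lhom L B B ?\<theta>" by (rule lhom_plus[OF lB lB p1 p2])
  have fth: "\<forall>b\<in>carrier B. f (?\<theta> b) = f b"
  proof
    fix b assume b: "b \<in> carrier B"
    have "f (?\<theta> b) = f (p1 b) \<oplus>\<^bsub>C\<^esub> f (p2 b)" using lhom_add[OF f] lhom_closed[OF p1 b] lhom_closed[OF p2 b] by simp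
    also have "\<dots> = eU (f b) \<oplus>\<^bsub>C\<^esub> (f b \<ominus>\<^bsub>C\<^esub> eU (f b))" using fp1 fp2 b unfolding eV_def by simp
    also have "\<dots> = f b" using C.add_minus_cancel fc[OF b] lhom_closed[OF eU fc[OF b]] by simp
    finally show "f (?\<theta> b) = f b" .
  qed
  let ?\<Phi> = "\<lambda>a. \<phi>1 a \<oplus>\<^bsub>A\<^esub> \<phi>2 a"
  have Ph: "lhom L A A ?\<Phi>" by (rule lhom_plus[OF lA lA ph1 ph2])
  have gPh: "\<forall>a\<in>carrier A. g (?\<Phi> a) = ?\<theta> (g a)"
    using lhom_add[OF g] lhom_closed[OF ph1] lhom_closed[OF ph2] gph1 gph2 by simp
  have bPh: "bij_betw ?\<Phi> (carrier A) (carrier A)" by (rule K1[OF ind th fth Ph gPh])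
  obtain S where S: "fgL L A S (\<lambda>x. x)" using fg_fgL[OF fA] by blast
  have "bij_betw \<phi>1 (carrier A) (carrier A) \<or> bij_betw \<phi>2 (carrier A) (carrier A)"
    by (rule A.local_two[OF aa S ind ph1 ph2 bPh])
  thus "U = {\<zero>\<^bsub>C\<^esub>} \<or> V = {\<zero>\<^bsub>C\<^esub>}"
  proof
    assume "bij_betw \<phi>1 (carrier A) (carrier A)"
    hence "carrier C \<subseteq> eU ` carrier C" by (rule K2[OF lmin p1 eU fp1 ph1 _ gph1])
    hence CU: "carrier C \<subseteq> U" using eUp by auto
    have "V \<subseteq> {\<zero>\<^bsub>C\<^esub>}" using CU int C.submod_sub[OF sV] by auto
    thus ?thesis using C.submod_zero[OF sV] by auto
  next
    assume "bij_betw \<phi>2 (carrier A) (carrier A)"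
    hence "carrier C \<subseteq> eV ` carrier C" by (rule K2[OF lmin p2 leV fp2 ph2 _ gph2])
    hence CV: "carrier C \<subseteq> V" using eUp unfolding eV_def by auto
    have "U \<subseteq> {\<zero>\<^bsub>C\<^esub>}" using CV int C.submod_sub[OF sU] by auto
    thus ?thesis using C.submod_zero[OF sU] by auto
  qed
qed

end



context ses_ctx begin

lemma left_min:
  assumes ind: "indecomposable L C" and rmin: "right_minimal L B C f"
  shows "left_minimal L A B g"
  unfolding left_minimal_def
proof (intro allI impI)
  fix h assume "lhom L B B h \<and> (\<forall>x\<in>carrier A. h (g x) = g x)"
  hence h: "lhom L B B h" and hg: "\<forall>x\<in>carrier A. h (g x) = g x" by auto
  have kv: "\<forall>b\<in>carrier B. f b = \<zero>\<^bsub>C\<^esub> \<longrightarrow> f (h b) = \<zero>\<^bsub>C\<^esub>"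
  proof (intro ballI impI)
    fix b assume "b \<in> carrier B" "f b = \<zero>\<^bsub>C\<^esub>"
    then obtain a where a: "a \<in> carrier A" "b = g a" using kerf by blast
    show "f (h b) = \<zero>\<^bsub>C\<^esub>" using a hg fg0 by simp
  qed
  obtain \<psi> where ps: "lhom L C C \<psi>" and psf: "\<forall>b\<in>carrier B. \<psi> (f b) = f (h b)"
    using factor_through[OF lB lC lC f fs lhom_comp[OF h f] kv] by blast
  have bj: "bij_betw \<psi> (carrier C) (carrier C)" by (rule K1'[OF ind h hg ps psf])
  note I = inv_facts[OF lC ps bj]
  let ?i = "the_inv_into (carrier C) \<psi>"
  obtain k where k: "lhom L B B k" and fk: "\<forall>b\<in>carrier B. f (k b) = ?i (f b)"
    using proj_ext[OF pB fB fC f fs lhom_comp[OF f I(1)]] by blast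
  have "\<forall>b\<in>carrier B. f (k (h b)) = f b"
  proof
    fix b assume b: "b \<in> carrier B"
    have "f (k (h b)) = ?i (f (h b))" using fk lhom_closed[OF h b] by simp
    also have "\<dots> = ?i (\<psi> (f b))" using psf b by simp
    also have "\<dots> = f b" using the_inv_into_f_f bj fc[OF b] unfolding bij_betw_def by metis
    finally show "f (k (h b)) = f b" .
  qed
  hence bkh: "bij_betw (\<lambda>x. k (h x)) (carrier B) (carrier B)"
    using rmin lhom_comp[OF h k] unfolding right_minimal_def by blast
  have inj: "inj_on h (carrier B)"
  proof (rule inj_onI)
    fix x y assume "x \<in> carrier B" "y \<in> carrier B" "h x = h y"
    thus "x = y" using bkh unfolding bij_betw_def inj_on_def by metis
  qed
  have sur: "h ` carrier B = carrier B"
  proof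
    show "h ` carrier B \<subseteq> carrier B" using lhom_closed[OF h] by auto
    show "carrier B \<subseteq> h ` carrier B"
    proof
      fix b assume b: "b \<in> carrier B"
      have c': "?i (f b) \<in> carrier C" using I(3) fc[OF b] by simp
      then obtain b' where b': "b' \<in> carrier B" "?i (f b) = f b'" using fsurj by blast
      have "f (h b') = \<psi> (f b')" using psf b' by simp
      also have "\<dots> = f b" using b' I(2) fc[OF b] by metis
      finally have e: "f (h b') = f b" .
      have hb': "h b' \<in> carrier B" using lhom_closed[OF h b'(1)] .
      have "f (b \<ominus>\<^bsub>B\<^esub> h b') = \<zero>\<^bsub>C\<^esub>" using lhom_minus[OF lB lC f b hb'] e fc[OF b]
        by (simp add: C.minus_eq C.r_neg)
      then obtain a where a: "a \<in> carrier A" "b \<ominus>\<^bsub>B\<^esub> h b' = g a" using kerf b hb' by blast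
      have "b = h b' \<oplus>\<^bsub>B\<^esub> (b \<ominus>\<^bsub>B\<^esub> h b')" using B.add_minus_cancel b hb' by simp
      also have "\<dots> = h b' \<oplus>\<^bsub>B\<^esub> h (g a)" using a hg by simp
      also have "\<dots> = h (b' \<oplus>\<^bsub>B\<^esub> g a)" using lhom_add[OF h b'(1) gc[OF a(1)]] by simp
      finally show "b \<in> h ` carrier B" using b'(1) gc[OF a(1)] by blast
    qed
  qed
  show "bij_betw h (carrier B) (carrier B)" using inj sur unfolding bij_betw_def by simp
qed

lemma K2':
  assumes rmin: "right_minimal L B C f" and p: "lhom L B B p" and e: "lhom L A A e"
    and pg: "\<forall>a\<in>carrier A. p (g a) = g (e a)" and ps: "lhom L C C \<psi>"
    and bj: "bij_betw \<psi> (carrier C) (carrier C)" and psf: "\<forall>b\<in>carrier B. \<psi> (f b) = f (p b)"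
  shows "\<forall>a\<in>carrier A. e a = \<zero>\<^bsub>A\<^esub> \<longrightarrow> a = \<zero>\<^bsub>A\<^esub>"
proof -
  note I = inv_facts[OF lC ps bj]
  let ?i = "the_inv_into (carrier C) \<psi>"
  obtain k where k: "lhom L B B k" and fk: "\<forall>b\<in>carrier B. f (k b) = ?i (f b)"
    using proj_ext[OF pB fB fC f fs lhom_comp[OF f I(1)]] by blast
  have "\<forall>b\<in>carrier B. f (k (p b)) = f b"
  proof
    fix b assume b: "b \<in> carrier B"
    have "f (k (p b)) = ?i (f (p b))" using fk lhom_closed[OF p b] by simp
    also have "\<dots> = ?i (\<psi> (f b))" using psf b by simp
    also have "\<dots> = f b" using the_inv_into_f_f bj fc[OF b] unfolding bij_betw_def by metis
    finally show "f (k (p b)) = f b" .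
  qed
  hence bkp: "bij_betw (\<lambda>x. k (p x)) (carrier B) (carrier B)"
    using rmin lhom_comp[OF p k] unfolding right_minimal_def by blast
  have inj: "inj_on p (carrier B)"
  proof (rule inj_onI)
    fix x y assume "x \<in> carrier B" "y \<in> carrier B" "p x = p y"
    thus "x = y" using bkp unfolding bij_betw_def inj_on_def by metis
  qed
  show ?thesis
  proof (intro ballI impI)
    fix a assume a: "a \<in> carrier A" and ea: "e a = \<zero>\<^bsub>A\<^esub>"
    have "p (g a) = \<zero>\<^bsub>B\<^esub>" using pg a ea gz by simp
    moreover have "p \<zero>\<^bsub>B\<^esub> = \<zero>\<^bsub>B\<^esub>" by (rule lhom_zero[OF lB lB p])
    ultimately have "g a = \<zero>\<^bsub>B\<^esub>" using inj gc[OF a] unfolding inj_on_def by (metis B.zero_closed)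
    thus "a = \<zero>\<^bsub>A\<^esub>" using g0 a by blast
  qed
qed

lemma indec_A:
  assumes ind: "indecomposable L C" and rmin: "right_minimal L B C f"
  shows "indecomposable L A"
  unfolding indecomposable_def
proof (intro conjI allI impI)
  show "carrier A \<noteq> {\<zero>\<^bsub>A\<^esub>}"
  proof
    assume A0: "carrier A = {\<zero>\<^bsub>A\<^esub>}"
    have fi: "inj_on f (carrier B)"
    proof (rule ker_inj[OF lB lC f], intro ballI impI)
      fix b assume "b \<in> carrier B" "f b = \<zero>\<^bsub>C\<^esub>"
      then obtain a where "a \<in> carrier A" "b = g a" using kerf by blast
      thus "b = \<zero>\<^bsub>B\<^esub>" using A0 gz by auto
    qed
    have bf: "bij_betw f (carrier B) (carrier C)" using fi fs unfolding bij_betw_def by simp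
    have u: "lhom L C B (the_inv_into (carrier B) f)" by (rule lhom_inv[OF lB lC f bf])
    have "\<forall>c\<in>carrier C. f (the_inv_into (carrier B) f c) = c" using f_the_inv_into_f[OF fi] fs by auto
    thus False using no_section[OF u] by blast
  qed
next
  fix U V assume "submod L A U \<and> submod L A V \<and> U \<inter> V = {\<zero>\<^bsub>A\<^esub>} \<and> {x \<oplus>\<^bsub>A\<^esub> y |x y. x \<in> U \<and> y \<in> V} = carrier A"
  hence sU: "submod L A U" and sV: "submod L A V" and int: "U \<inter> V = {\<zero>\<^bsub>A\<^esub>}"
    and sum: "{x \<oplus>\<^bsub>A\<^esub> y |x y. x \<in> U \<and> y \<in> V} = carrier A" by auto
  obtain eU where eU: "lhom L A A eU" and eUp: "\<forall>x\<in>carrier A. eU x \<in> U \<and> x \<ominus>\<^bsub>A\<^esub> eU x \<in> V"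
    and eUU: "\<forall>x\<in>U. eU x = x" and eUV: "\<forall>x\<in>V. eU x = \<zero>\<^bsub>A\<^esub>"
    using A.proj_exists[OF sU sV int sum] by blast
  define eV where "eV x = x \<ominus>\<^bsub>A\<^esub> eU x" for x
  have leV: "lhom L A A eV" unfolding eV_def by (rule lhom_diff[OF lA lA lhom_id eU])
  obtain p1 where p1: "lhom L B B p1" and p1g: "\<forall>a\<in>carrier A. p1 (g a) = g (eU a)"
    using inj_ext[OF iB fA fB g gi lhom_comp[OF eU g]] by blast
  obtain p2 where p2: "lhom L B B p2" and p2g: "\<forall>a\<in>carrier A. p2 (g a) = g (eV a)"
    using inj_ext[OF iB fA fB g gi lhom_comp[OF leV g]] by blast
  have kv1: "\<forall>b\<in>carrier B. f b = \<zero>\<^bsub>C\<^esub> \<longrightarrow> f (p1 b) = \<zero>\<^bsub>C\<^esub>"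
  proof (intro ballI impI)
    fix b assume "b \<in> carrier B" "f b = \<zero>\<^bsub>C\<^esub>"
    then obtain a where a: "a \<in> carrier A" "b = g a" using kerf by blast
    show "f (p1 b) = \<zero>\<^bsub>C\<^esub>" using a p1g fg0 lhom_closed[OF eU a(1)] by simp
  qed
  have kv2: "\<forall>b\<in>carrier B. f b = \<zero>\<^bsub>C\<^esub> \<longrightarrow> f (p2 b) = \<zero>\<^bsub>C\<^esub>"
  proof (intro ballI impI)
    fix b assume "b \<in> carrier B" "f b = \<zero>\<^bsub>C\<^esub>"
    then obtain a where a: "a \<in> carrier A" "b = g a" using kerf by blast
    show "f (p2 b) = \<zero>\<^bsub>C\<^esub>" using a p2g fg0 lhom_closed[OF leV a(1)] by simp
  qed
  obtain \<psi>1 where ps1: "lhom L C C \<psi>1" and psf1: "\<forall>b\<in>carrier B. \<psi>1 (f b) = f (p1 b)"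
    using factor_through[OF lB lC lC f fs lhom_comp[OF p1 f] kv1] by blast
  obtain \<psi>2 where ps2: "lhom L C C \<psi>2" and psf2: "\<forall>b\<in>carrier B. \<psi>2 (f b) = f (p2 b)"
    using factor_through[OF lB lC lC f fs lhom_comp[OF p2 f] kv2] by blast
  let ?\<theta> = "\<lambda>b. p1 b \<oplus>\<^bsub>B\<^esub> p2 b"
  have th: "lhom L B B ?\<theta>" by (rule lhom_plus[OF lB lB p1 p2])
  have thg: "\<forall>a\<in>carrier A. ?\<theta> (g a) = g a"
  proof
    fix a assume a: "a \<in> carrier A"
    have ea: "eU a \<in> carrier A" "eV a \<in> carrier A" using lhom_closed[OF eU a] lhom_closed[OF leV a] by auto
    have "?\<theta> (g a) = g (eU a) \<oplus>\<^bsub>B\<^esub> g (eV a)" using p1g p2g a by simp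
    also have "\<dots> = g (eU a \<oplus>\<^bsub>A\<^esub> eV a)" using lhom_add[OF g ea(1) ea(2)] by simp
    also have "\<dots> = g a" unfolding eV_def using A.add_minus_cancel a ea(1) by simp
    finally show "?\<theta> (g a) = g a" .
  qed
  let ?\<Psi> = "\<lambda>c. \<psi>1 c \<oplus>\<^bsub>C\<^esub> \<psi>2 c"
  have Ps: "lhom L C C ?\<Psi>" by (rule lhom_plus[OF lC lC ps1 ps2])
  have Psf: "\<forall>b\<in>carrier B. ?\<Psi> (f b) = f (?\<theta> b)"
    using psf1 psf2 lhom_add[OF f] lhom_closed[OF p1] lhom_closed[OF p2] by simp
  have bPs: "bij_betw ?\<Psi> (carrier C) (carrier C)" by (rule K1'[OF ind th thg Ps Psf])
  obtain S where S: "fgL L C S (\<lambda>x. x)" using fg_fgL[OF fC] by blast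
  have "bij_betw \<psi>1 (carrier C) (carrier C) \<or> bij_betw \<psi>2 (carrier C) (carrier C)"
    by (rule C.local_two[OF aa S ind ps1 ps2 bPs])
  thus "U = {\<zero>\<^bsub>A\<^esub>} \<or> V = {\<zero>\<^bsub>A\<^esub>}"
  proof
    assume "bij_betw \<psi>1 (carrier C) (carrier C)"
    hence k: "\<forall>a\<in>carrier A. eU a = \<zero>\<^bsub>A\<^esub> \<longrightarrow> a = \<zero>\<^bsub>A\<^esub>" by (rule K2'[OF rmin p1 eU p1g ps1 _ psf1])
    have "V \<subseteq> {\<zero>\<^bsub>A\<^esub>}" using k eUV A.submod_sub[OF sV] by auto
    thus ?thesis using A.submod_zero[OF sV] by auto
  next
    assume "bij_betw \<psi>2 (carrier C) (carrier C)"
    hence k: "\<forall>a\<in>carrier A. eV a = \<zero>\<^bsub>A\<^esub> \<longrightarrow> a = \<zero>\<^bsub>A\<^esub>" by (rule K2'[OF rmin p2 leV p2g ps2 _ psf2])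
    have "a \<in> U \<Longrightarrow> eV a = \<zero>\<^bsub>A\<^esub>" for a unfolding eV_def using eUU A.submod_sub[OF sU]
      by (simp add: A.minus_eq A.r_neg)
    hence "U \<subseteq> {\<zero>\<^bsub>A\<^esub>}" using k A.submod_sub[OF sU] by auto
    thus ?thesis using A.submod_zero[OF sU] by auto
  qed
qed

theorem main: "(indecomposable L A \<and> left_minimal L A B g) \<longleftrightarrow> (indecomposable L C \<and> right_minimal L B C f)"
  using right_min indec_C left_min indec_A by blast

end



theorem lemma2p6:
  fixes R :: "'k ring" and phi :: "'k \<Rightarrow> 'r" and L :: "'r ring"
    and A :: "('r, 'a) module" and B :: "('r, 'b) module" and C :: "('r, 'c) module"
    and g :: "'a \<Rightarrow> 'b" and f :: "'b \<Rightarrow> 'c"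
  assumes "artin_algebra R phi L"
    and "fg_lmodule L A" and "fg_lmodule L B" and "fg_lmodule L C"
    and "short_exact L A B C g f"
    and "\<not> ses_splits L B C f"
    and "proj_mod L B" and "inj_mod L B"
  shows "(indecomposable L A \<and> left_minimal L A B g) \<longleftrightarrow>
         (indecomposable L C \<and> right_minimal L B C f)"
  by (rule ses_ctx.main[OF ses_ctx.intro[OF assms]])

end
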